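(* For $\beta\in\mathcal D$ let $\mathcal C_\beta=\{\alpha\in\mathcal C:\mathrm{supp}\,\alpha\subseteq\mathrm{supp}\,\beta\}$, viewed as a code of length $|\beta|$ on $\mathrm{supp}\,\beta$. Then: (1) if $|\beta|=16$, $\mathcal C_\beta\cong\mathrm{RM}(2,4)$; (2) if $|\beta|=24$, $\mathcal C_\beta\cong\{(\alpha,\gamma,\delta)\in(\mathbb Z_2^8)^3:\alpha,\gamma,\delta\text{ even},\ \alpha+\gamma+\delta\in H_8\}$; (3) if $|\beta|=32$, $\mathcal C_\beta\cong\mathrm{RM}(3,5)$; (4) if $|\beta|=48$, $\mathcal C_\beta=\mathcal C$. Consequently, for $\beta\neq0$, $\mathcal C_\beta$ contains a subcode which is self-dual in $\mathbb Z_2^{\mathrm{supp}\,\beta}$ and isomorphic to a direct sum of $|\beta|/8$ copies of $H_8$.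
   Context: $\mathcal D\subseteq\mathbb Z_2^{48}$ is spanned by $1^{16}0^{32}$, $0^{16}1^{16}0^{16}$, $0^{32}1^{16}$, $(0^81^8)^3$, $(0^41^4)^6$, $(0011)^{12}$, $(0101)^{12}$; its nonzero weights are $16,24,32,48$. $\mathcal C=\mathcal D^\perp$. $\mathrm{RM}(r,m)$ denotes the $r$-th order binary Reed–Muller code of length $2^m$. $H_8$ is the extended Hamming $[8,4,4]$ code spanned by $11111111$, $11110000$, $11001100$, $10101010$ (so $H_8\cong\mathrm{RM}(1,3)$). Isomorphism of codes means equality up to a permutation of coordinates. *)

theory Defs
  imports Main
begin

text \<open>Binary words are represented by their supports: a word of \<open>Z_2^I\<close> is a
  subset of the (finite) coordinate set \<open>I\<close>; addition in \<open>Z_2^I\<close> is symmetric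
  difference, the weight is the cardinality, and the standard inner product of
  two words is the parity of the size of the intersection of their supports.\<close>

definition sdiff :: "nat set \<Rightarrow> nat set \<Rightarrow> nat set" where
  "sdiff a b = (a - b) \<union> (b - a)"

inductive_set z2span :: "nat set set \<Rightarrow> nat set set" for G where
  zero: "{} \<in> z2span G"
| add: "g \<in> G \<Longrightarrow> x \<in> z2span G \<Longrightarrow> sdiff g x \<in> z2span G"

definition dual_code :: "nat set \<Rightarrow> nat set set \<Rightarrow> nat set set" where
  "dual_code I A = {x. x \<subseteq> I \<and> (\<forall>y\<in>A. even (card (x \<inter> y)))}"

definition code_iso :: "nat set \<Rightarrow> nat set set \<Rightarrow> nat set \<Rightarrow> nat set set \<Rightarrow> bool" where
  "code_iso I A J B \<longleftrightarrow> (\<exists>\<pi>. bij_betw \<pi> I J \<and> B = (\<lambda>x. \<pi> ` x) ` A)"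

definition D_gens :: "nat set set" where
  "D_gens = { {0..<16}, {16..<32}, {32..<48},
              {i. i < 48 \<and> (i div 8) mod 2 = 1},
              {i. i < 48 \<and> (i div 4) mod 2 = 1},
              {i. i < 48 \<and> (i div 2) mod 2 = 1},
              {i. i < 48 \<and> i mod 2 = 1} }"

definition D_code :: "nat set set" where
  "D_code = z2span D_gens"

definition C_code :: "nat set set" where
  "C_code = dual_code {..<48} D_code"

definition C_sub :: "nat set \<Rightarrow> nat set set" where
  "C_sub \<beta> = {\<alpha> \<in> C_code. \<alpha> \<subseteq> \<beta>}"

text \<open>Reed--Muller code \<open>RM(r,m)\<close> of length \<open>2^m\<close>: coordinates \<open>p < 2^m\<close> are the
  points of \<open>F_2^m\<close> (the binary digits of \<open>p\<close>); the code is spanned by the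
  evaluation vectors of the monomials \<open>\<Prod>i\<in>S. x_i\<close> with \<open>|S| \<le> r\<close>.\<close>
definition monomial_word :: "nat \<Rightarrow> nat set \<Rightarrow> nat set" where
  "monomial_word m S = {p. p < 2 ^ m \<and> (\<forall>i\<in>S. odd (p div 2 ^ i))}"

definition RM :: "nat \<Rightarrow> nat \<Rightarrow> nat set set" where
  "RM r m = z2span {monomial_word m S | S. S \<subseteq> {..<m} \<and> card S \<le> r}"

definition H8 :: "nat set set" where
  "H8 = z2span { {0..<8}, {0..<4}, {0,1,4,5}, {0,2,4,6} }"

definition blk :: "nat set \<Rightarrow> nat \<Rightarrow> nat set" where
  "blk x j = {i. i < 8 \<and> i + 8 * j \<in> x}"

definition Code24 :: "nat set set" where
  "Code24 = {x. x \<subseteq> {..<24} \<and> even (card (blk x 0)) \<and> even (card (blk x 1))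
               \<and> even (card (blk x 2)) \<and> sdiff (sdiff (blk x 0) (blk x 1)) (blk x 2) \<in> H8}"

definition H8_sum :: "nat \<Rightarrow> nat set set" where
  "H8_sum k = {x. x \<subseteq> {..<8 * k} \<and> (\<forall>j<k. blk x j \<in> H8)}"

end

theory Submission
  imports Defs
begin


section \<open>Symmetric difference algebra\<close>

lemma sdiff_assoc: "sdiff (sdiff a b) c = sdiff a (sdiff b c)" by (auto simp: sdiff_def)
lemma sdiff_comm: "sdiff a b = sdiff b a" by (auto simp: sdiff_def)
lemma sdiff_self: "sdiff a a = {}" by (auto simp: sdiff_def)
lemma sdiff_empty1[simp]: "sdiff {} a = a" by (auto simp: sdiff_def)
lemma sdiff_empty2[simp]: "sdiff a {} = a" by (auto simp: sdiff_def)
lemma sdiff_cancel: "sdiff a (sdiff a b) = b" by (auto simp: sdiff_def)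
lemma inter_sdiff: "x \<inter> sdiff a b = sdiff (x \<inter> a) (x \<inter> b)" by (auto simp: sdiff_def)

lemma card_sdiff_parity:
  assumes "finite A" "finite B"
  shows "even (card (sdiff A B)) \<longleftrightarrow> (even (card A) \<longleftrightarrow> even (card B))"
proof -
  have e: "sdiff A B = (A \<union> B) - (A \<inter> B)" by (auto simp: sdiff_def)
  have c1: "card (A \<union> B) + card (A \<inter> B) = card A + card B"
    using card_Un_Int[OF assms] by simp
  have c2: "card ((A \<union> B) - (A \<inter> B)) = card (A \<union> B) - card (A \<inter> B)"
    by (rule card_Diff_subset) (use assms in auto)
  have c3: "card (A \<inter> B) \<le> card (A \<union> B)"
    by (rule card_mono) (use assms in auto)
  have "card (sdiff A B) + 2 * card (A \<inter> B) = card A + card B"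
    using c1 c2 c3 e by simp
  then show ?thesis by presburger
qed

lemma span_gen: "g \<in> G \<Longrightarrow> g \<in> z2span G"
  using z2span.add[OF _ z2span.zero, of g G] by simp

lemma span_sdiff: "x \<in> z2span G \<Longrightarrow> y \<in> z2span G \<Longrightarrow> sdiff x y \<in> z2span G"
proof (induction x rule: z2span.induct)
  case zero then show ?case by simp
next
  case (add g x)
  then show ?case by (simp add: sdiff_assoc z2span.add)
qed

lemma span_minimal:
  assumes "{} \<in> S" "\<And>g x. g \<in> G \<Longrightarrow> x \<in> S \<Longrightarrow> sdiff g x \<in> S"
  shows "z2span G \<subseteq> S"
proof
  fix x assume "x \<in> z2span G" then show "x \<in> S"
    by (induction x rule: z2span.induct) (use assms in auto)
qed

lemma span_sub_span: "G \<subseteq> z2span H \<Longrightarrow> z2span G \<subseteq> z2span H"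
  by (rule span_minimal) (auto intro: z2span.zero span_sdiff)

lemma span_mono: "G \<subseteq> H \<Longrightarrow> z2span G \<subseteq> z2span H"
  by (rule span_sub_span) (auto intro: span_gen)

lemma span_insert: "z2span (insert a G) = z2span G \<union> (sdiff a) ` z2span G"
proof
  show "z2span (insert a G) \<subseteq> z2span G \<union> (sdiff a) ` z2span G"
  proof (rule span_minimal)
    show "{} \<in> z2span G \<union> (sdiff a) ` z2span G" by (simp add: z2span.zero)
  next
    fix g x assume g: "g \<in> insert a G" and x: "x \<in> z2span G \<union> (sdiff a) ` z2span G"
    show "sdiff g x \<in> z2span G \<union> (sdiff a) ` z2span G"
    proof (cases "g = a")
      case True
      then show ?thesis using x by (auto simp: sdiff_cancel)
    next
      case False
      then have gG: "g \<in> z2span G" using g by (auto intro: span_gen)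
      from x show ?thesis
      proof
        assume "x \<in> z2span G" then show ?thesis using gG by (auto intro: span_sdiff)
      next
        assume "x \<in> (sdiff a) ` z2span G"
        then obtain y where y: "y \<in> z2span G" "x = sdiff a y" by auto
        have "sdiff g x = sdiff a (sdiff g y)"
          unfolding y(2) by (metis sdiff_assoc sdiff_comm)
        then show ?thesis using gG y(1) by (auto intro: span_sdiff)
      qed
    qed
  qed
next
  have "z2span G \<subseteq> z2span (insert a G)" by (rule span_mono) auto
  moreover have "a \<in> z2span (insert a G)" by (auto intro: span_gen)
  ultimately show "z2span G \<union> (sdiff a) ` z2span G \<subseteq> z2span (insert a G)"
    by (auto intro: span_sdiff)
qed

lemma dual_anti: "G \<subseteq> H \<Longrightarrow> dual_code I H \<subseteq> dual_code I G"
  by (auto simp: dual_code_def)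

lemma dual_span:
  assumes "finite I"
  shows "dual_code I (z2span G) = dual_code I G"
proof
  show "dual_code I (z2span G) \<subseteq> dual_code I G"
    by (rule dual_anti) (auto intro: span_gen)
next
  show "dual_code I G \<subseteq> dual_code I (z2span G)"
  proof
    fix x assume x: "x \<in> dual_code I G"
    then have fx: "finite x" using assms by (auto simp: dual_code_def intro: finite_subset)
    have "even (card (x \<inter> y))" if "y \<in> z2span G" for y
      using that
    proof (induction y rule: z2span.induct)
      case zero then show ?case by simp
    next
      case (add g y)
      have "even (card (x \<inter> g))" using x add.hyps(1) by (auto simp: dual_code_def)
      then show ?case using add.IH fx
        by (simp add: inter_sdiff card_sdiff_parity)
    qed
    then show "x \<in> dual_code I (z2span G)" using x by (auto simp: dual_code_def)
  qed
qed

lemma dual_sdiff: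
  assumes "finite I" "x \<in> dual_code I H" "y \<in> dual_code I H"
  shows "sdiff x y \<in> dual_code I H"
proof -
  have xI: "x \<subseteq> I" and yI: "y \<subseteq> I" using assms by (auto simp: dual_code_def)
  have fx: "finite x" "finite y" using xI yI assms(1) by (auto intro: finite_subset)
  have "even (card (sdiff x y \<inter> h))" if h: "h \<in> H" for h
  proof -
    have "even (card (x \<inter> h))" "even (card (y \<inter> h))" using assms h by (auto simp: dual_code_def)
    moreover have "sdiff x y \<inter> h = sdiff (x \<inter> h) (y \<inter> h)" by (auto simp: sdiff_def)
    ultimately show ?thesis using fx by (simp add: card_sdiff_parity)
  qed
  moreover have "sdiff x y \<subseteq> I" using xI yI by (auto simp: sdiff_def)
  ultimately show ?thesis by (auto simp: dual_code_def)
qed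

lemma span_in_dual:
  assumes "finite I" "G \<subseteq> dual_code I H"
  shows "z2span G \<subseteq> dual_code I H"
proof (rule span_minimal)
  show "{} \<in> dual_code I H" by (simp add: dual_code_def)
next
  fix g x assume "g \<in> G" "x \<in> dual_code I H"
  then show "sdiff g x \<in> dual_code I H" using assms by (auto intro: dual_sdiff)
qed

lemma dual_equiv:
  assumes "finite I" "G \<subseteq> z2span H" "H \<subseteq> z2span G"
  shows "dual_code I G = dual_code I H"
proof -
  have "z2span G = z2span H"
    using span_sub_span[OF assms(2)] span_sub_span[OF assms(3)] by auto
  then show ?thesis using dual_span[OF assms(1), of G] dual_span[OF assms(1), of H] by simp
qed

section \<open>Systematic form criterion\<close>

lemma span_eq_dual:
  assumes fin: "finite I" and GI: "G \<subseteq> Pow I"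
    and orth: "\<And>g h. g \<in> G \<Longrightarrow> h \<in> H \<Longrightarrow> even (card (g \<inter> h))"
    and W: "\<And>p. p \<in> I \<Longrightarrow> p \<notin> P \<Longrightarrow> \<exists>w\<in>z2span G. w - P = {p}"
    and T: "\<And>q. q \<in> P \<Longrightarrow> \<exists>t\<in>z2span H. t \<inter> P = {q}"
  shows "z2span G = dual_code I H"
proof
  have GD: "G \<subseteq> dual_code I H" using GI orth by (auto simp: dual_code_def)
  show sub: "z2span G \<subseteq> dual_code I H" by (rule span_in_dual[OF fin GD])
  show "dual_code I H \<subseteq> z2span G"
  proof
    fix x assume "x \<in> dual_code I H"
    then show "x \<in> z2span G"
    proof (induction "card (x - P)" arbitrary: x rule: less_induct)
      case less
      have xI: "x \<subseteq> I" using less.prems by (auto simp: dual_code_def)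
      have fx: "finite x" using xI fin by (rule finite_subset)
      show ?case
      proof (cases "x - P = {}")
        case True
        have "x = {}"
        proof (rule ccontr)
          assume "x \<noteq> {}"
          then obtain q where q: "q \<in> x" by auto
          then have "q \<in> P" using True by auto
          then obtain t where t: "t \<in> z2span H" "t \<inter> P = {q}" using T by blast
          have "x \<in> dual_code I (z2span H)" using less.prems dual_span[OF fin] by simp
          then have "even (card (x \<inter> t))" using t(1) by (auto simp: dual_code_def)
          moreover have "x \<inter> t = {q}" using t(2) True q by blast
          ultimately show False by simp
        qed
        then show ?thesis by (simp add: z2span.zero)
      next
        case False
        then obtain p where p: "p \<in> x" "p \<notin> P" by auto
        then obtain w where w: "w \<in> z2span G" "w - P = {p}" using W xI by blast
        have wD: "w \<in> dual_code I H" using w(1) sub by auto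
        define x' where "x' = sdiff x w"
        have x'D: "x' \<in> dual_code I H" unfolding x'_def by (rule dual_sdiff[OF fin less.prems wD])
        have "x' - P = (x - P) - {p}" using w(2) p unfolding x'_def sdiff_def by auto
        then have "card (x' - P) < card (x - P)"
        proof -
          have "card (x - P) > 0" using p fx by (auto simp: card_gt_0_iff)
          then show ?thesis using \<open>x' - P = (x - P) - {p}\<close> p by simp
        qed
        then have "x' \<in> z2span G" using less.hyps x'D by blast
        then have "sdiff w x' \<in> z2span G" using w(1) by (rule span_sdiff[rotated])
        moreover have "sdiff w x' = x" unfolding x'_def by (metis sdiff_cancel sdiff_comm)
        ultimately show ?thesis by simp
      qed
    qed
  qed
qed

section \<open>Transport along a bijection\<close>

lemma dual_image:
  assumes bij: "bij_betw \<sigma> J B" and AJ: "A \<subseteq> Pow J"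
  shows "(image \<sigma>) ` dual_code J A = dual_code B ((image \<sigma>) ` A)"
proof -
  have inj: "inj_on \<sigma> J" and im: "\<sigma> ` J = B" using bij by (auto simp: bij_betw_def)
  have key: "card (\<sigma> ` x \<inter> \<sigma> ` a) = card (x \<inter> a)" if "x \<subseteq> J" "a \<subseteq> J" for x a
  proof -
    have "\<sigma> ` x \<inter> \<sigma> ` a = \<sigma> ` (x \<inter> a)" using inj_on_image_Int[OF inj that] by simp
    moreover have "inj_on \<sigma> (x \<inter> a)" using inj that by (auto intro: inj_on_subset)
    ultimately show ?thesis by (simp add: card_image)
  qed
  show ?thesis
  proof
    show "(image \<sigma>) ` dual_code J A \<subseteq> dual_code B ((image \<sigma>) ` A)"
    proof
      fix y assume "y \<in> (image \<sigma>) ` dual_code J A"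
      then obtain x where x: "x \<in> dual_code J A" "y = \<sigma> ` x" by auto
      have xJ: "x \<subseteq> J" using x by (auto simp: dual_code_def)
      show "y \<in> dual_code B ((image \<sigma>) ` A)"
        unfolding dual_code_def
      proof (intro CollectI conjI ballI)
        show "y \<subseteq> B" using xJ im x(2) by auto
      next
        fix z assume "z \<in> (image \<sigma>) ` A"
        then obtain a where a: "a \<in> A" "z = \<sigma> ` a" by auto
        have "a \<subseteq> J" using a AJ by auto
        then show "even (card (y \<inter> z))" using key[OF xJ] x a by (auto simp: dual_code_def)
      qed
    qed
  next
    show "dual_code B ((image \<sigma>) ` A) \<subseteq> (image \<sigma>) ` dual_code J A"
    proof
      fix y assume y: "y \<in> dual_code B ((image \<sigma>) ` A)"
      define x where "x = inv_into J \<sigma> ` y"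
      have yB: "y \<subseteq> B" using y by (auto simp: dual_code_def)
      have xJ: "x \<subseteq> J" unfolding x_def using yB im by (auto intro: inv_into_into)
      have yx: "\<sigma> ` x = y" unfolding x_def by (rule image_inv_into_cancel[OF im yB])
      have "x \<in> dual_code J A"
        unfolding dual_code_def
      proof (intro CollectI conjI ballI)
        show "x \<subseteq> J" by fact
      next
        fix a assume a: "a \<in> A"
        then have "a \<subseteq> J" using AJ by auto
        then have "card (x \<inter> a) = card (y \<inter> \<sigma> ` a)" using key[OF xJ] yx by simp
        moreover have "even (card (y \<inter> \<sigma> ` a))" using y a by (auto simp: dual_code_def)
        ultimately show "even (card (x \<inter> a))" by simp
      qed
      then show "y \<in> (image \<sigma>) ` dual_code J A" using yx by auto
    qed
  qed
qed

lemma iso_from: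
  assumes bij: "bij_betw \<sigma> J B" and AJ: "A \<subseteq> Pow J" and C: "(image \<sigma>) ` A = C"
  shows "code_iso B C J A"
  unfolding code_iso_def
proof (intro exI conjI)
  show "bij_betw (inv_into J \<sigma>) B J" by (rule bij_betw_inv_into[OF bij])
  have inj: "inj_on \<sigma> J" using bij by (auto simp: bij_betw_def)
  have "(\<lambda>x. inv_into J \<sigma> ` x) ` C = (\<lambda>a. inv_into J \<sigma> ` \<sigma> ` a) ` A"
    unfolding C[symmetric] by (simp add: image_image)
  also have "\<dots> = (\<lambda>a. a) ` A"
    by (rule image_cong[OF refl], rule inv_into_image_cancel[OF inj]) (use AJ in auto)
  also have "\<dots> = A" by simp
  finally show "A = (\<lambda>x. inv_into J \<sigma> ` x) ` C" by simp
qed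



definition sw :: "nat \<Rightarrow> nat set" where "sw n = {i. bit n i}"

lemma sw_xor: "sw (xor a b) = sdiff (sw a) (sw b)" by (auto simp: sw_def sdiff_def bit_xor_iff)
lemma sw_and: "sw (and a b) = sw a \<inter> sw b" by (auto simp: sw_def bit_and_iff)
lemma sw_or: "sw (or a b) = sw a \<union> sw b" by (auto simp: sw_def bit_or_iff)
lemma sw_0[simp]: "sw 0 = {}" by (auto simp: sw_def)
lemma sw_pow: "sw (2 ^ q) = {q}" by (auto simp: sw_def bit_exp_iff)
lemma sw_inj: "sw a = sw b \<Longrightarrow> a = b"
  by (rule bit_eqI) (auto simp: sw_def set_eq_iff)

lemma sw_bound: assumes "n < 2 ^ m" shows "sw n \<subseteq> {..<m}"
proof
  fix i assume "i \<in> sw n"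
  then have b: "odd (n div 2 ^ i)" by (simp add: sw_def bit_iff_odd)
  show "i \<in> {..<m}"
  proof (rule ccontr)
    assume "i \<notin> {..<m}"
    then have "(2::nat) ^ m \<le> 2 ^ i" by (simp add: power_increasing)
    then have "n div 2 ^ i = 0" using assms by (metis div_less less_le_trans)
    then show False using b by simp
  qed
qed

lemma finite_sw[simp]: "finite (sw n)"
  using sw_bound[of n n] by (auto intro: finite_subset)

lemma sw_minus: "sw (xor w (and w p)) = sw w - sw p"
  by (auto simp: sw_def bit_xor_iff bit_and_iff)

lemma sw_mask: "sw (2 ^ n - 1) = {..<n}"
proof -
  have "sw (mask n) = {..<n}" by (auto simp: sw_def bit_mask_iff)
  then show ?thesis by (metis mask_eq_exp_minus_1)
qed

function popc :: "nat \<Rightarrow> nat" where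
  "popc n = (if n = 0 then 0 else n mod 2 + popc (n div 2))"
  by auto
termination by (relation "measure id") auto
declare popc.simps[simp del]

lemma sw_rec: "sw n = (if odd n then insert 0 (Suc ` sw (n div 2)) else Suc ` sw (n div 2))"
proof (rule set_eqI)
  fix i show "i \<in> sw n \<longleftrightarrow> i \<in> (if odd n then insert 0 (Suc ` sw (n div 2)) else Suc ` sw (n div 2))"
    by (cases i) (auto simp: sw_def bit_0 bit_Suc)
qed

lemma card_sw: "card (sw n) = popc n"
proof (induction n rule: popc.induct)
  case (1 n)
  show ?case
  proof (cases "n = 0")
    case True then show ?thesis by (simp add: popc.simps)
  next
    case False
    have c: "card (Suc ` sw (n div 2)) = popc (n div 2)"
      using 1 False by (simp add: card_image)
    show ?thesis
      by (subst sw_rec, subst popc.simps) (use c False in \<open>auto simp: odd_iff_mod_2_eq_one\<close>)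
  qed
qed

fun xorall :: "nat list \<Rightarrow> nat" where
  "xorall [] = 0" | "xorall (x # xs) = xor x (xorall xs)"

fun xsel :: "nat list \<Rightarrow> nat \<Rightarrow> nat" where
  "xsel [] s = 0"
| "xsel (b # bs) s = (if odd s then xor b (xsel bs (s div 2)) else xsel bs (s div 2))"

fun maskL :: "nat list \<Rightarrow> nat" where
  "maskL [] = 0" | "maskL (q # qs) = or (2 ^ q) (maskL qs)"

fun imgm :: "nat list \<Rightarrow> nat \<Rightarrow> nat" where
  "imgm [] h = 0"
| "imgm (q # qs) h = (if odd h then or (2 ^ q) (imgm qs (h div 2)) else imgm qs (h div 2))"

fun spanN :: "nat list \<Rightarrow> nat list" where
  "spanN [] = [0]" | "spanN (g # gs) = spanN gs @ map (xor g) (spanN gs)"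

lemma xorall_span: "set ws \<subseteq> set gs \<Longrightarrow> sw (xorall ws) \<in> z2span (sw ` set gs)"
  by (induction ws) (auto simp: sw_xor intro: z2span.zero z2span.add)

lemma xsel_span: "sw (xsel gs s) \<in> z2span (sw ` set gs)"
proof (induction gs arbitrary: s)
  case Nil then show ?case by (simp add: z2span.zero)
next
  case (Cons b bs)
  have "z2span (sw ` set bs) \<subseteq> z2span (sw ` set (b # bs))" by (rule span_mono) auto
  then have i: "sw (xsel bs (s div 2)) \<in> z2span (sw ` set (b # bs))" using Cons[of "s div 2"] by auto
  have "sw b \<in> z2span (sw ` set (b # bs))" by (rule span_gen) auto
  then show ?case using i by (auto simp: sw_xor intro: span_sdiff)
qed

lemma sw_maskL: "sw (maskL l) = set l"
  by (induction l) (auto simp: sw_or sw_pow)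

lemma sw_imgm: "sw (imgm p h) = (\<lambda>k. p ! k) ` (sw h \<inter> {..<length p})"
proof (induction p arbitrary: h)
  case Nil then show ?case by simp
next
  case (Cons q qs)
  have e: "sw h \<inter> {..<length (q # qs)} =
      (if odd h then insert 0 (Suc ` (sw (h div 2) \<inter> {..<length qs})) else Suc ` (sw (h div 2) \<inter> {..<length qs}))"
    by (subst sw_rec) auto
  show ?case
    by (subst e) (auto simp: sw_or sw_pow Cons image_image)
qed

lemma spanN_correct: "z2span (sw ` set gs) = sw ` set (spanN gs)"
proof (induction gs)
  case Nil
  have "z2span {} \<subseteq> {{}}" by (rule span_minimal) auto
  then show ?case by (auto intro: z2span.zero)
next
  case (Cons g gs)
  have "z2span (sw ` set (g # gs)) = z2span (sw ` set gs) \<union> sdiff (sw g) ` z2span (sw ` set gs)"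
    by (simp add: span_insert)
  also have "\<dots> = sw ` set (spanN (g # gs))"
    by (simp add: Cons image_Un image_image sw_xor)
  finally show ?case .
qed

lemma L6_bits:
  assumes GB: "list_all (\<lambda>g. g < 2 ^ n) Gs"
    and orth: "list_all (\<lambda>g. list_all (\<lambda>h. even (popc (and g h))) Hs) Gs"
    and W: "list_all (\<lambda>(q, ws). list_all (\<lambda>w. w \<in> set Gs) ws
                   \<and> xor (xorall ws) (and (xorall ws) Pm) = 2 ^ q) W"
    and Wc: "or (maskL (map fst W)) Pm = 2 ^ n - 1"
    and T: "list_all (\<lambda>(q, ts). list_all (\<lambda>t. t \<in> set Hs) ts \<and> and (xorall ts) Pm = 2 ^ q) T"
    and Tc: "and Pm (maskL (map fst T)) = Pm"
  shows "z2span (sw ` set Gs) = dual_code {..<n} (sw ` set Hs)"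
proof (rule span_eq_dual[where P = "sw Pm"])
  show "sw ` set Gs \<subseteq> Pow {..<n}" using GB sw_bound by (auto simp: list_all_iff)
next
  fix g h assume "g \<in> sw ` set Gs" "h \<in> sw ` set Hs"
  then show "even (card (g \<inter> h))" using orth
    by (auto simp: list_all_iff card_sw simp flip: sw_and)
next
  fix p assume p: "p \<in> {..<n}" "p \<notin> sw Pm"
  have "sw (or (maskL (map fst W)) Pm) = {..<n}" using Wc sw_mask by simp
  then have "p \<in> fst ` set W" using p by (auto simp: sw_or sw_maskL)
  then obtain ws where "(p, ws) \<in> set W" by auto
  then have "set ws \<subseteq> set Gs" "xor (xorall ws) (and (xorall ws) Pm) = 2 ^ p"
    using W by (auto simp: list_all_iff)
  then show "\<exists>w\<in>z2span (sw ` set Gs). w - sw Pm = {p}"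
    using xorall_span sw_minus sw_pow by metis
next
  fix q assume q: "q \<in> sw Pm"
  have "sw (and Pm (maskL (map fst T))) = sw Pm" using Tc by simp
  then have "q \<in> fst ` set T" using q by (auto simp: sw_and sw_maskL)
  then obtain ts where "(q, ts) \<in> set T" by auto
  then have "set ts \<subseteq> set Hs" "and (xorall ts) Pm = 2 ^ q"
    using T by (auto simp: list_all_iff)
  then show "\<exists>t\<in>z2span (sw ` set Hs). t \<inter> sw Pm = {q}"
    using xorall_span sw_and sw_pow by metis
qed simp



lemma sw_set_map: "sw ` set (map maskL L) = set (map set L)"
  by (simp add: image_image sw_maskL)

definition H8N :: "nat list" where "H8N = [255,15,51,85]"

lemma H8g_sw: "{{0..<8},{0..<4},{0,1,4,5},{0,2,4,6}} = sw ` set H8N"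
proof -
  have e: "map maskL [[0,1,2,3,4,5,6,7],[0,1,2,3],[0,1,4,5],[0,2,4,6]] = [255,15,51,85::nat]"
    by (simp add: maskL.simps)
  have "set (map set [[0,1,2,3,4,5,6,7],[0,1,2,3],[0,1,4,5],[0,2,4,6::nat]]) = {{0..<8},{0..<4},{0,1,4,5},{0,2,4,6}}"
    by (simp add: atLeast0LessThan lessThan_nat_numeral lessThan_Suc insert_commute)
  then show ?thesis using sw_set_map[of "[[0,1,2,3,4,5,6,7],[0,1,2,3],[0,1,4,5],[0,2,4,6]]"]
    unfolding e H8N_def by simp
qed

lemma H8_span: "H8 = z2span (sw ` set H8N)"
  unfolding H8_def H8g_sw ..

lemma H8_dual: "H8 = dual_code {..<8} (sw ` set H8N)"
  unfolding H8_span H8N_def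
  by (rule L6_bits[where Pm=232 and W="[(0, [15, 51, 85]), (1, [255, 85]), (2, [255, 51]), (4, [255, 15])]" and T="[(3, [15]), (5, [51]), (6, [85]), (7, [255, 15, 51, 85])]"]; simp add: popc.simps)

lemma H8N_bound: "h \<in> set H8N \<Longrightarrow> sw h \<subseteq> {..<8}"
  by (rule sw_bound) (auto simp: H8N_def)

lemma sw_shift: "sw (h * 2 ^ k) = (\<lambda>i. i + k) ` sw h"
proof (rule set_eqI)
  fix i
  show "i \<in> sw (h * 2 ^ k) \<longleftrightarrow> i \<in> (\<lambda>i. i + k) ` sw h"
  proof
    assume "i \<in> sw (h * 2 ^ k)"
    then have "k \<le> i" "bit h (i - k)"
      by (auto simp: sw_def bit_push_bit_iff_nat simp flip: push_bit_eq_mult)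
    then show "i \<in> (\<lambda>i. i + k) ` sw h"
      by (auto simp: sw_def image_iff intro!: exI[of _ "i - k"])
  next
    assume "i \<in> (\<lambda>i. i + k) ` sw h"
    then show "i \<in> sw (h * 2 ^ k)"
      by (auto simp: sw_def bit_push_bit_iff_nat simp flip: push_bit_eq_mult)
  qed
qed

lemma blk_sub: "blk x j \<subseteq> {..<8}" by (auto simp: blk_def)

lemma blk_card:
  assumes "h \<subseteq> {..<8}"
  shows "card (blk x j \<inter> h) = card (x \<inter> (\<lambda>i. i + 8 * j) ` h)"
proof -
  have "x \<inter> (\<lambda>i. i + 8 * j) ` h = (\<lambda>i. i + 8 * j) ` (blk x j \<inter> h)"
    using assms by (auto simp: blk_def image_iff)
  moreover have "inj_on (\<lambda>i. i + 8 * j) (blk x j \<inter> h)" by (auto simp: inj_on_def)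
  ultimately show ?thesis by (simp add: card_image)
qed

lemma blk_card_sw:
  assumes "h \<in> set H8N"
  shows "card (blk x j \<inter> sw h) = card (x \<inter> sw (h * 2 ^ (8 * j)))"
  using blk_card[OF H8N_bound[OF assms], of x j] by (simp add: sw_shift)

lemma blk_in_H8:
  "blk x j \<in> H8 \<longleftrightarrow> (\<forall>h\<in>set H8N. even (card (x \<inter> sw (h * 2 ^ (8 * j)))))"
  unfolding H8_dual dual_code_def using blk_sub[of x j] by (auto simp: blk_card_sw)

definition HkN :: "nat \<Rightarrow> nat list" where
  "HkN k = concat (map (\<lambda>j. map (\<lambda>h. h * 2 ^ (8 * j)) H8N) [0..<k])"

lemma H8_sum_dual: "H8_sum k = dual_code {..<8 * k} (sw ` set (HkN k))"
  unfolding H8_sum_def dual_code_def HkN_def blk_in_H8 by auto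

lemma card_parity3:
  assumes "finite A" "finite B" "finite C"
  shows "even (card (sdiff (sdiff A B) C)) \<longleftrightarrow> even (card A + card B + card C)"
proof -
  have "finite (sdiff A B)" using assms by (auto simp: sdiff_def)
  then show ?thesis using assms by (simp add: card_sdiff_parity)
qed

definition H24N :: "nat list" where "H24N = [255, 65280, 16711680, 16777215, 986895, 3355443, 5592405]"

lemma H24N_eq: "H24N = map (\<lambda>j. 255 * 2 ^ (8 * j)) [0,1,2] @ map (\<lambda>h. or h (or (h * 2 ^ 8) (h * 2 ^ 16))) H8N"
  by (simp add: H24N_def H8N_def)

lemma sw255: "sw 255 = {..<8}"
proof -
  have "sw (2 ^ 8 - 1) = {..<8}" by (rule sw_mask)
  then show ?thesis by simp
qed

lemma Code24_dual: "Code24 = dual_code {..<24} (sw ` set H24N)"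
proof (rule set_eqI)
  fix x
  show "x \<in> Code24 \<longleftrightarrow> x \<in> dual_code {..<24} (sw ` set H24N)"
  proof (cases "x \<subseteq> {..<24}")
    case False then show ?thesis by (simp add: Code24_def dual_code_def)
  next
    case True
    have fx: "finite x" using True by (auto intro: finite_subset)
    have ev: "even (card (blk x j)) \<longleftrightarrow> even (card (x \<inter> sw (255 * 2 ^ (8 * j))))" for j
    proof -
      have "blk x j = blk x j \<inter> sw 255" using blk_sub sw255 by auto
      then show ?thesis using blk_card_sw[of 255 x j] by (simp add: H8N_def)
    qed
    define s where "s = sdiff (sdiff (blk x 0) (blk x 1)) (blk x 2)"
    have s8: "s \<subseteq> {..<8}" unfolding s_def using blk_sub by (auto simp: sdiff_def)
    have sh: "even (card (s \<inter> sw h)) \<longleftrightarrow> even (card (x \<inter> sw (or h (or (h * 2 ^ 8) (h * 2 ^ 16)))))"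
      if h: "h \<in> set H8N" for h
    proof -
      have "s \<inter> sw h = sdiff (sdiff (blk x 0 \<inter> sw h) (blk x 1 \<inter> sw h)) (blk x 2 \<inter> sw h)"
        unfolding s_def by (auto simp: sdiff_def)
      then have "even (card (s \<inter> sw h)) \<longleftrightarrow> even (card (blk x 0 \<inter> sw h) + card (blk x 1 \<inter> sw h) + card (blk x 2 \<inter> sw h))"
        by (simp add: card_parity3 blk_def)
      also have "\<dots> \<longleftrightarrow> even (card (x \<inter> sw h) + card (x \<inter> sw (h * 2 ^ 8)) + card (x \<inter> sw (h * 2 ^ 16)))"
        using blk_card_sw[OF h, of x 0] blk_card_sw[OF h, of x 1] blk_card_sw[OF h, of x 2] by simp
      also have "card (x \<inter> sw h) + card (x \<inter> sw (h * 2 ^ 8)) + card (x \<inter> sw (h * 2 ^ 16))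
          = card (x \<inter> sw (or h (or (h * 2 ^ 8) (h * 2 ^ 16))))"
      proof -
        have b: "sw h \<subseteq> {..<8}" using H8N_bound[OF h] .
        have s8: "sw (h * 2 ^ 8) = (\<lambda>i. i + 8) ` sw h" by (rule sw_shift)
        have s16: "sw (h * 2 ^ 16) = (\<lambda>i. i + 16) ` sw h" by (rule sw_shift)
        have d1: "(x \<inter> sw h) \<inter> (x \<inter> sw (h * 2 ^ 8)) = {}" unfolding s8 using b by auto
        have d2: "(x \<inter> sw h \<union> x \<inter> sw (h * 2 ^ 8)) \<inter> (x \<inter> sw (h * 2 ^ 16)) = {}" unfolding s8 s16 using b by auto
        have "card (x \<inter> sw (or h (or (h * 2 ^ 8) (h * 2 ^ 16))))
            = card ((x \<inter> sw h \<union> x \<inter> sw (h * 2 ^ 8)) \<union> x \<inter> sw (h * 2 ^ 16))"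
          by (simp add: sw_or Int_Un_distrib Un_assoc)
        also have "\<dots> = card (x \<inter> sw h \<union> x \<inter> sw (h * 2 ^ 8)) + card (x \<inter> sw (h * 2 ^ 16))"
          by (rule card_Un_disjoint) (use fx d2 in auto)
        also have "card (x \<inter> sw h \<union> x \<inter> sw (h * 2 ^ 8)) = card (x \<inter> sw h) + card (x \<inter> sw (h * 2 ^ 8))"
          by (rule card_Un_disjoint) (use fx d1 in auto)
        finally show ?thesis by simp
      qed
      finally show ?thesis .
    qed
    have "s \<in> H8 \<longleftrightarrow> (\<forall>h\<in>set H8N. even (card (s \<inter> sw h)))"
      unfolding H8_dual dual_code_def using s8 by auto
    also have "\<dots> \<longleftrightarrow> (\<forall>h\<in>set H8N. even (card (x \<inter> sw (or h (or (h * 2 ^ 8) (h * 2 ^ 16))))))"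
      using sh by auto
    finally have sH: "s \<in> H8 \<longleftrightarrow> (\<forall>h\<in>set H8N. even (card (x \<inter> sw (or h (or (h * 2 ^ 8) (h * 2 ^ 16))))))" .
    have "x \<in> Code24 \<longleftrightarrow> (\<forall>j\<in>{0,1,2::nat}. even (card (x \<inter> sw (255 * 2 ^ (8 * j)))))
        \<and> (\<forall>h\<in>set H8N. even (card (x \<inter> sw (or h (or (h * 2 ^ 8) (h * 2 ^ 16))))))"
      unfolding Code24_def using True ev[of 0] ev[of 1] ev[of 2] sH unfolding s_def by simp
    also have "\<dots> \<longleftrightarrow> x \<in> dual_code {..<24} (sw ` set H24N)"
      unfolding H24N_eq dual_code_def using True by auto
    finally show ?thesis .
  qed
qed

definition monoN :: "nat \<Rightarrow> nat list \<Rightarrow> nat" where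
  "monoN m l = maskL (filter (\<lambda>p. list_all (\<lambda>i. odd (p div 2 ^ i)) l) [0..<2 ^ m])"

lemma monomial_monoN: "monomial_word m (set l) = sw (monoN m l)"
  by (auto simp: monoN_def sw_maskL monomial_word_def list_all_iff)

lemma RM_list: "RM r m = z2span (sw ` set (map (monoN m) (filter (\<lambda>l. length (remdups l) \<le> r) (subseqs [0..<m]))))"
proof -
  have "{monomial_word m S | S. S \<subseteq> {..<m} \<and> card S \<le> r}
      = sw ` set (map (monoN m) (filter (\<lambda>l. length (remdups l) \<le> r) (subseqs [0..<m])))"
  proof (intro set_eqI iffI)
    fix w assume "w \<in> {monomial_word m S | S. S \<subseteq> {..<m} \<and> card S \<le> r}"
    then obtain S where S: "w = monomial_word m S" "S \<subseteq> {..<m}" "card S \<le> r" by auto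
    have "S \<in> Pow (set [0..<m])" using S by auto
    then obtain l where l: "l \<in> set (subseqs [0..<m])" "S = set l"
      unfolding subseqs_powset[symmetric] by auto
    then show "w \<in> sw ` set (map (monoN m) (filter (\<lambda>l. length (remdups l) \<le> r) (subseqs [0..<m])))"
      using S by (auto simp: monomial_monoN length_remdups_card_conv)
  next
    fix w assume "w \<in> sw ` set (map (monoN m) (filter (\<lambda>l. length (remdups l) \<le> r) (subseqs [0..<m])))"
    then obtain l where l: "l \<in> set (subseqs [0..<m])" "length (remdups l) \<le> r" "w = sw (monoN m l)" by auto
    have "set l \<in> Pow (set [0..<m])" using l(1) unfolding subseqs_powset[symmetric] by auto
    then show "w \<in> {monomial_word m S | S. S \<subseteq> {..<m} \<and> card S \<le> r}"
      using l by (auto simp: monomial_monoN[symmetric] length_remdups_card_conv intro!: exI[of _ "set l"])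
  qed
  then show ?thesis unfolding RM_def by simp
qed

definition H16N :: "nat list" where "H16N = [43690, 52428, 61680, 65280, 65535]"
definition H32N :: "nat list" where "H32N = [2863311530, 3435973836, 4042322160, 4278255360, 4294901760, 4294967295]"

lemma RM24_span: "RM 2 4 = z2span (sw ` set [34952, 41120, 43520, 43690, 49344, 52224, 52428, 61440, 61680, 65280, 65535])"
proof -
  have "map (monoN 4) (filter (\<lambda>l. length (remdups l) \<le> 2) (subseqs [0..<4])) = [34952, 41120, 43520, 43690, 49344, 52224, 52428, 61440, 61680, 65280, 65535]"
    by (simp add: upt_rec monoN_def)
  then show ?thesis by (simp add: RM_list)
qed

lemma RM24_dual: "RM 2 4 = dual_code {..<16} (sw ` set H16N)"
  unfolding RM24_span H16N_def
  by (rule L6_bits[where Pm=59520 and W="[(0, [65535, 43690, 52428, 61680, 65280, 34952, 41120, 43520, 49344, 52224, 61440]), (1, [43690, 34952, 41120, 43520]), (2, [52428, 34952, 49344, 52224]), (3, [34952]), (4, [61680, 41120, 49344, 61440]), (5, [41120]), (6, [49344]), (8, [65280, 43520, 52224, 61440]), (9, [43520]), (10, [52224]), (12, [61440])]" and T="[(7, [65535, 65280]), (11, [65535, 61680]), (13, [65535, 52428]), (14, [65535, 43690]), (15, [65535, 43690, 52428, 61680, 65280])]"]; simp add: popc.simps)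

lemma RM35_span: "RM 3 5 = z2span (sw ` set [2155905152, 2281736192, 2290614272, 2290649224, 2684395520, 2694840320, 2694881440, 2852126720, 2852170240, 2863267840, 2863311530, 3221274624, 3233808384, 3233857728, 3422552064, 3422604288, 3435921408, 3435973836, 4026531840, 4026593280, 4042260480, 4042322160, 4278190080, 4278255360, 4294901760, 4294967295])"
proof -
  have "map (monoN 5) (filter (\<lambda>l. length (remdups l) \<le> 3) (subseqs [0..<5])) = [2155905152, 2281736192, 2290614272, 2290649224, 2684395520, 2694840320, 2694881440, 2852126720, 2852170240, 2863267840, 2863311530, 3221274624, 3233808384, 3233857728, 3422552064, 3422604288, 3435921408, 3435973836, 4026531840, 4026593280, 4042260480, 4042322160, 4278190080, 4278255360, 4294901760, 4294967295]"
    by (simp add: upt_rec monoN_def)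
  then show ?thesis by (simp add: RM_list)
qed

lemma RM35_dual: "RM 3 5 = dual_code {..<32} (sw ` set H32N)"
  unfolding RM35_span H32N_def
  by (rule L6_bits[where Pm=3900735488 and W="[(0, [4294967295, 2863311530, 3435973836, 4042322160, 4278255360, 4294901760, 2290649224, 2694881440, 2852170240, 2863267840, 3233857728, 3422604288, 3435921408, 4026593280, 4042260480, 4278190080, 2155905152, 2281736192, 2290614272, 2684395520, 2694840320, 2852126720, 3221274624, 3233808384, 3422552064, 4026531840]), (1, [2863311530, 2290649224, 2694881440, 2852170240, 2863267840, 2155905152, 2281736192, 2290614272, 2684395520, 2694840320, 2852126720]), (2, [3435973836, 2290649224, 3233857728, 3422604288, 3435921408, 2155905152, 2281736192, 2290614272, 3221274624, 3233808384, 3422552064]), (3, [2290649224, 2155905152, 2281736192, 2290614272]), (4, [4042322160, 2694881440, 3233857728, 4026593280, 4042260480, 2155905152, 2684395520, 2694840320, 3221274624, 3233808384, 4026531840]), (5, [2694881440, 2155905152, 2684395520, 2694840320]), (6, [3233857728, 2155905152, 3221274624, 3233808384]), (7, [2155905152]), (8, [4278255360, 2852170240, 3422604288, 4026593280, 4278190080, 2281736192, 2684395520, 2852126720, 3221274624, 3422552064, 4026531840]), (9, [2852170240, 2281736192, 2684395520, 2852126720]), (10, [3422604288, 2281736192, 3221274624, 3422552064]), (11, [2281736192]), (12, [4026593280, 2684395520, 3221274624, 4026531840]), (13, [2684395520]), (14, [3221274624]), (16, [4294901760, 2863267840, 3435921408, 4042260480, 4278190080, 2290614272, 2694840320, 2852126720,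 3233808384, 3422552064, 4026531840]), (17, [2863267840, 2290614272, 2694840320, 2852126720]), (18, [3435921408, 2290614272, 3233808384, 3422552064]), (19, [2290614272]), (20, [4042260480, 2694840320, 3233808384, 4026531840]), (21, [2694840320]), (22, [3233808384]), (24, [4278190080, 2852126720, 3422552064, 4026531840]), (25, [2852126720]), (26, [3422552064]), (28, [4026531840])]" and T="[(15, [4294967295, 4294901760]), (23, [4294967295, 4278255360]), (27, [4294967295, 4042322160]), (29, [4294967295, 3435973836]), (30, [4294967295, 2863311530]), (31, [2863311530, 3435973836, 4042322160, 4278255360, 4294901760])]"]; simp add: popc.simps)

lemma H2_span: "z2span (sw ` set (HkN 2)) = dual_code {..<16} (sw ` set (HkN 2))"
proof -
  have e: "HkN 2 = [255, 15, 51, 85, 65280, 3840, 13056, 21760]" by (simp add: HkN_def H8N_def upt_rec)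
  show ?thesis unfolding e
    by (rule L6_bits[where Pm=59624 and W="[(0, [15, 51, 85]), (1, [255, 85]), (2, [255, 51]), (4, [255, 15]), (8, [3840, 13056, 21760]), (9, [65280, 21760]), (10, [65280, 13056]), (12, [65280, 3840])]" and T="[(3, [15]), (5, [51]), (6, [85]), (7, [255, 15, 51, 85]), (11, [3840]), (13, [13056]), (14, [21760]), (15, [65280, 3840, 13056, 21760])]"]; simp add: popc.simps)
qed

lemma H2_sd: "H8_sum 2 = z2span (sw ` set (HkN 2))" "dual_code {..<16} (H8_sum 2) = H8_sum 2"
proof -
  show a: "H8_sum 2 = z2span (sw ` set (HkN 2))" using H8_sum_dual[of 2] H2_span by simp
  show "dual_code {..<16} (H8_sum 2) = H8_sum 2"
  proof -
    have "dual_code {..<16} (H8_sum 2) = dual_code {..<16} (z2span (sw ` set (HkN 2)))" by (simp only: a)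
    also have "\<dots> = dual_code {..<16} (sw ` set (HkN 2))" by (simp add: dual_span)
    also have "\<dots> = H8_sum 2" using H8_sum_dual[of 2] by simp
    finally show ?thesis .
  qed
qed

lemma H3_span: "z2span (sw ` set (HkN 3)) = dual_code {..<24} (sw ` set (HkN 3))"
proof -
  have e: "HkN 3 = [255, 15, 51, 85, 65280, 3840, 13056, 21760, 16711680, 983040, 3342336, 5570560]" by (simp add: HkN_def H8N_def upt_rec)
  show ?thesis unfolding e
    by (rule L6_bits[where Pm=15263976 and W="[(0, [15, 51, 85]), (1, [255, 85]), (2, [255, 51]), (4, [255, 15]), (8, [3840, 13056, 21760]), (9, [65280, 21760]), (10, [65280, 13056]), (12, [65280, 3840]), (16, [983040, 3342336, 5570560]), (17, [16711680, 5570560]), (18, [16711680, 3342336]), (20, [16711680, 983040])]" and T="[(3, [15]), (5, [51]), (6, [85]), (7, [255, 15, 51, 85]), (11, [3840]), (13, [13056]), (14, [21760]), (15, [65280, 3840, 13056, 21760]), (19, [983040]), (21, [3342336]), (22, [5570560]), (23, [16711680, 983040, 3342336, 5570560])]"]; simp add: popc.simps)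
qed

lemma H3_sd: "H8_sum 3 = z2span (sw ` set (HkN 3))" "dual_code {..<24} (H8_sum 3) = H8_sum 3"
proof -
  show a: "H8_sum 3 = z2span (sw ` set (HkN 3))" using H8_sum_dual[of 3] H3_span by simp
  show "dual_code {..<24} (H8_sum 3) = H8_sum 3"
  proof -
    have "dual_code {..<24} (H8_sum 3) = dual_code {..<24} (z2span (sw ` set (HkN 3)))" by (simp only: a)
    also have "\<dots> = dual_code {..<24} (sw ` set (HkN 3))" by (simp add: dual_span)
    also have "\<dots> = H8_sum 3" using H8_sum_dual[of 3] by simp
    finally show ?thesis .
  qed
qed

lemma H4_span: "z2span (sw ` set (HkN 4)) = dual_code {..<32} (sw ` set (HkN 4))"
proof -
  have e: "HkN 4 = [255, 15, 51, 85, 65280, 3840, 13056, 21760, 16711680, 983040, 3342336, 5570560, 4278190080, 251658240, 855638016, 1426063360]" by (simp add: HkN_def H8N_def upt_rec)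
  show ?thesis unfolding e
    by (rule L6_bits[where Pm=3907578088 and W="[(0, [15, 51, 85]), (1, [255, 85]), (2, [255, 51]), (4, [255, 15]), (8, [3840, 13056, 21760]), (9, [65280, 21760]), (10, [65280, 13056]), (12, [65280, 3840]), (16, [983040, 3342336, 5570560]), (17, [16711680, 5570560]), (18, [16711680, 3342336]), (20, [16711680, 983040]), (24, [251658240, 855638016, 1426063360]), (25, [4278190080, 1426063360]), (26, [4278190080, 855638016]), (28, [4278190080, 251658240])]" and T="[(3, [15]), (5, [51]), (6, [85]), (7, [255, 15, 51, 85]), (11, [3840]), (13, [13056]), (14, [21760]), (15, [65280, 3840, 13056, 21760]), (19, [983040]), (21, [3342336]), (22, [5570560]), (23, [16711680, 983040, 3342336, 5570560]), (27, [251658240]), (29, [855638016]), (30, [1426063360]), (31, [4278190080, 251658240, 855638016, 1426063360])]"]; simp add: popc.simps)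
qed

lemma H4_sd: "H8_sum 4 = z2span (sw ` set (HkN 4))" "dual_code {..<32} (H8_sum 4) = H8_sum 4"
proof -
  show a: "H8_sum 4 = z2span (sw ` set (HkN 4))" using H8_sum_dual[of 4] H4_span by simp
  show "dual_code {..<32} (H8_sum 4) = H8_sum 4"
  proof -
    have "dual_code {..<32} (H8_sum 4) = dual_code {..<32} (z2span (sw ` set (HkN 4)))" by (simp only: a)
    also have "\<dots> = dual_code {..<32} (sw ` set (HkN 4))" by (simp add: dual_span)
    also have "\<dots> = H8_sum 4" using H8_sum_dual[of 4] by simp
    finally show ?thesis .
  qed
qed

lemma H6_span: "z2span (sw ` set (HkN 6)) = dual_code {..<48} (sw ` set (HkN 6))"
proof -
  have e: "HkN 6 = [255, 15, 51, 85, 65280, 3840, 13056, 21760, 16711680, 983040, 3342336, 5570560, 4278190080, 251658240, 855638016, 1426063360, 1095216660480, 64424509440, 219043332096, 365072220160, 280375465082880, 16492674416640, 56075093016576, 93458488360960]" by (simp add: HkN_def H8N_def upt_rec)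
  show ?thesis unfolding e
    by (rule L6_bits[where Pm=256087037634792 and W="[(0, [15, 51, 85]), (1, [255, 85]), (2, [255, 51]), (4, [255, 15]), (8, [3840, 13056, 21760]), (9, [65280, 21760]), (10, [65280, 13056]), (12, [65280, 3840]), (16, [983040, 3342336, 5570560]), (17, [16711680, 5570560]), (18, [16711680, 3342336]), (20, [16711680, 983040]), (24, [251658240, 855638016, 1426063360]), (25, [4278190080, 1426063360]), (26, [4278190080, 855638016]), (28, [4278190080, 251658240]), (32, [64424509440, 219043332096, 365072220160]), (33, [1095216660480, 365072220160]), (34, [1095216660480, 219043332096]), (36, [1095216660480, 64424509440]), (40, [16492674416640, 56075093016576, 93458488360960]), (41, [280375465082880, 93458488360960]), (42, [280375465082880, 56075093016576]), (44, [280375465082880, 16492674416640])]" and T="[(3, [15]), (5, [51]), (6, [85]), (7, [255, 15, 51, 85]), (11, [3840]), (13, [13056]), (14, [21760]), (15, [65280, 3840, 13056, 21760]), (19, [983040]), (21, [3342336]), (22, [5570560]), (23, [16711680, 983040, 3342336, 5570560]), (27, [251658240]), (29, [855638016]), (30, [1426063360]), (31, [4278190080, 251658240, 855638016, 1426063360]), (35, [64424509440]), (37, [219043332096]), (38, [365072220160]), (39, [1095216660480, 64424509440, 219043332096, 365072220160]), (43, [16492674416640]), (45, [56075093016576]), (46, [93458488360960]), (47, [280375465082880, 16492674416640, 56075093016576, 93458488360960])]"]; simp add: popc.simps)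
qed

lemma H6_sd: "H8_sum 6 = z2span (sw ` set (HkN 6))" "dual_code {..<48} (H8_sum 6) = H8_sum 6"
proof -
  show a: "H8_sum 6 = z2span (sw ` set (HkN 6))" using H8_sum_dual[of 6] H6_span by simp
  show "dual_code {..<48} (H8_sum 6) = H8_sum 6"
  proof -
    have "dual_code {..<48} (H8_sum 6) = dual_code {..<48} (z2span (sw ` set (HkN 6)))" by (simp only: a)
    also have "\<dots> = dual_code {..<48} (sw ` set (HkN 6))" by (simp add: dual_span)
    also have "\<dots> = H8_sum 6" using H8_sum_dual[of 6] by simp
    finally show ?thesis .
  qed
qed



definition Dnums :: "nat list" where
  "Dnums = [65535, 4294901760, 281470681743360, 280379743338240, 264917625139440, 225179981368524, 187649984473770]"

definition chkb :: "nat list \<Rightarrow> nat \<Rightarrow> nat list \<Rightarrow> nat list \<Rightarrow> nat list \<Rightarrow> bool" where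
  "chkb Hs nb p sa sb \<longleftrightarrow> distinct p \<and> maskL p = nb \<and> nb < 281474976710656
     \<and> map (xsel (map (and nb) Dnums)) sa = map (imgm p) Hs
     \<and> map (xsel (map (imgm p) Hs)) sb = map (and nb) Dnums"

definition Hsel :: "nat \<Rightarrow> nat list" where
  "Hsel m = (if m = 16 then H16N else if m = 24 then H24N else H32N)"

lemma D_gens_eq: "D_gens = sw ` set Dnums"
proof -
  have e: "map maskL [[0..<16], [16..<32], [32..<48], filter (\<lambda>i. (i div 8) mod 2 = 1) [0..<48],
      filter (\<lambda>i. (i div 4) mod 2 = 1) [0..<48], filter (\<lambda>i. (i div 2) mod 2 = 1) [0..<48],
      filter (\<lambda>i. i mod 2 = 1) [0..<48]] = Dnums"
    by (simp add: Dnums_def upt_rec)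
  have "D_gens = set (map set [[0..<16], [16..<32], [32..<48], filter (\<lambda>i. (i div 8) mod 2 = 1) [0..<48],
      filter (\<lambda>i. (i div 4) mod 2 = 1) [0..<48], filter (\<lambda>i. (i div 2) mod 2 = 1) [0..<48],
      filter (\<lambda>i. i mod 2 = 1) [0..<48]])"
    unfolding D_gens_def by (simp only: list.set_map set_upt set_filter list.map list.set) auto
  then show ?thesis using sw_set_map e by metis
qed

lemma D_code_eq: "D_code = sw ` set (spanN Dnums)"
  by (simp add: D_code_def D_gens_eq spanN_correct)

lemma C_code_eq: "C_code = dual_code {..<48} (sw ` set Dnums)"
  by (simp add: C_code_def D_code_def D_gens_eq dual_span)

lemma C_sub_eq:
  assumes "nb < 2 ^ 48"
  shows "C_sub (sw nb) = dual_code (sw nb) (sw ` set (map (and nb) Dnums))"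
proof (rule set_eqI)
  fix x
  have b: "sw nb \<subseteq> {..<48}" using sw_bound[OF assms] .
  show "x \<in> C_sub (sw nb) \<longleftrightarrow> x \<in> dual_code (sw nb) (sw ` set (map (and nb) Dnums))"
  proof (cases "x \<subseteq> sw nb")
    case True
    have i: "x \<inter> sw (and nb g) = x \<inter> sw g" for g using True by (auto simp: sw_and)
    show ?thesis using True b by (auto simp: C_sub_def C_code_eq dual_code_def i)
  next
    case False then show ?thesis by (auto simp: C_sub_def dual_code_def)
  qed
qed

lemma img_sw: "h < 2 ^ length p \<Longrightarrow> (\<lambda>k. p ! k) ` sw h = sw (imgm p h)"
  using sw_imgm[of p h] sw_bound[of h "length p"] by (simp add: Int_absorb2)

lemma chkb_bij: "chkb Hs nb p sa sb \<Longrightarrow> bij_betw (\<lambda>k. p ! k) {..<length p} (sw nb)"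
  unfolding chkb_def by (auto intro!: bij_betw_nth simp: sw_maskL[symmetric])

lemma sel_span:
  assumes "map (xsel B) s = A"
  shows "sw ` set A \<subseteq> z2span (sw ` set B)"
  using assms xsel_span by auto

lemma chkb_img:
  assumes c: "chkb Hs nb p sa sb" and hb: "list_all (\<lambda>h. h < 2 ^ length p) Hs"
  shows "(image (\<lambda>k. p ! k)) ` dual_code {..<length p} (sw ` set Hs) = C_sub (sw nb)"
proof -
  note cc = c[unfolded chkb_def]
  have bij: "bij_betw (\<lambda>k. p ! k) {..<length p} (sw nb)" by (rule chkb_bij[OF c])
  have HP: "sw ` set Hs \<subseteq> Pow {..<length p}" using hb sw_bound by (auto simp: list_all_iff)
  have "(image (\<lambda>k. p ! k)) ` dual_code {..<length p} (sw ` set Hs)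
      = dual_code (sw nb) ((image (\<lambda>k. p ! k)) ` sw ` set Hs)" by (rule dual_image[OF bij HP])
  also have "(image (\<lambda>k. p ! k)) ` sw ` set Hs = sw ` set (map (imgm p) Hs)"
  proof -
    have "(image (\<lambda>k. p ! k)) ` sw ` set Hs = (\<lambda>h. sw (imgm p h)) ` set Hs"
      unfolding image_image by (rule image_cong[OF refl]) (use hb in \<open>auto simp: list_all_iff img_sw\<close>)
    then show ?thesis by (simp add: image_image)
  qed
  also have "dual_code (sw nb) (sw ` set (map (imgm p) Hs)) = dual_code (sw nb) (sw ` set (map (and nb) Dnums))"
  proof (rule dual_equiv)
    have e1: "map (xsel (map (and nb) Dnums)) sa = map (imgm p) Hs" using cc by blast
    have e2: "map (xsel (map (imgm p) Hs)) sb = map (and nb) Dnums" using cc by blast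
    show "sw ` set (map (imgm p) Hs) \<subseteq> z2span (sw ` set (map (and nb) Dnums))" by (rule sel_span[OF e1])
    show "sw ` set (map (and nb) Dnums) \<subseteq> z2span (sw ` set (map (imgm p) Hs))" by (rule sel_span[OF e2])
  qed simp
  also have "\<dots> = C_sub (sw nb)" using C_sub_eq[of nb] cc by simp
  finally show ?thesis .
qed

lemma kind:
  assumes c: "chkb Hs nb p sa sb" and m: "length p = m" and hb: "list_all (\<lambda>h. h < 2 ^ m) Hs"
    and tgt: "Tg = dual_code {..<m} (sw ` set Hs)"
    and hk: "H8_sum (m div 8) \<subseteq> Tg"
    and sd: "dual_code {..<m} (H8_sum (m div 8)) = H8_sum (m div 8)"
  shows "card (sw nb) = m \<and> code_iso (sw nb) (C_sub (sw nb)) {..<m} Tg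
    \<and> (\<exists>S. S \<subseteq> C_sub (sw nb) \<and> S = dual_code (sw nb) S
          \<and> code_iso (sw nb) S {..<card (sw nb)} (H8_sum (card (sw nb) div 8)))"
proof -
  let ?\<sigma> = "\<lambda>k. p ! k"
  have bij: "bij_betw ?\<sigma> {..<m} (sw nb)" using chkb_bij[OF c] m by simp
  have card: "card (sw nb) = m" using bij_betw_same_card[OF bij] by simp
  have TP: "Tg \<subseteq> Pow {..<m}" unfolding tgt by (auto simp: dual_code_def)
  have img: "(image ?\<sigma>) ` Tg = C_sub (sw nb)" using chkb_img[OF c] hb m tgt by simp
  have iso1: "code_iso (sw nb) (C_sub (sw nb)) {..<m} Tg" by (rule iso_from[OF bij TP img])
  let ?H = "H8_sum (m div 8)"
  define S where "S = (image ?\<sigma>) ` ?H"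
  have HP: "?H \<subseteq> Pow {..<m}" using hk TP by auto
  have S1: "S \<subseteq> C_sub (sw nb)" unfolding S_def using hk img by auto
  have S2: "S = dual_code (sw nb) S"
  proof -
    have "dual_code (sw nb) S = (image ?\<sigma>) ` dual_code {..<m} ?H"
      unfolding S_def by (rule dual_image[OF bij HP, symmetric])
    then show ?thesis using sd S_def by simp
  qed
  have S3: "code_iso (sw nb) S {..<m} ?H" by (rule iso_from[OF bij HP]) (simp add: S_def)
  show ?thesis using card iso1 S1 S2 S3 by auto
qed

lemma orth_sub:
  assumes "list_all (\<lambda>a. a < 2 ^ m) A" "list_all (\<lambda>a. list_all (\<lambda>h. even (popc (and a h))) Hs) A"
  shows "z2span (sw ` set A) \<subseteq> dual_code {..<m} (sw ` set Hs)"
proof (rule span_in_dual)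
  show "sw ` set A \<subseteq> dual_code {..<m} (sw ` set Hs)"
  proof
    fix x assume "x \<in> sw ` set A"
    then obtain a where a: "a \<in> set A" "x = sw a" by auto
    have "sw a \<subseteq> {..<m}" using assms(1) a by (intro sw_bound) (auto simp: list_all_iff)
    moreover have "\<forall>h\<in>set Hs. even (card (sw a \<inter> sw h))"
      using assms(2) a by (auto simp: list_all_iff card_sw simp flip: sw_and)
    ultimately show "x \<in> dual_code {..<m} (sw ` set Hs)" using a by (auto simp: dual_code_def)
  qed
qed simp

lemma H2_in: "H8_sum 2 \<subseteq> RM 2 4"
  unfolding H2_sd(1) RM24_dual
  by (rule orth_sub; simp add: HkN_def H8N_def H16N_def upt_rec popc.simps)

lemma H3_in: "H8_sum 3 \<subseteq> Code24"
  unfolding H3_sd(1) Code24_dual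
  by (rule orth_sub; simp add: HkN_def H8N_def H24N_def upt_rec popc.simps)

lemma H4_in: "H8_sum 4 \<subseteq> RM 3 5"
  unfolding H4_sd(1) RM35_dual
  by (rule orth_sub; simp add: HkN_def H8N_def H32N_def upt_rec popc.simps)

lemma H6_in: "H8_sum 6 \<subseteq> C_code"
  unfolding H6_sd(1) C_code_eq
  by (rule orth_sub; simp add: HkN_def H8N_def Dnums_def upt_rec popc.simps)


lemma pw0: "(2::nat) ^ 0 = 1" by simp
lemma pw1: "(2::nat) ^ 1 = 2" by simp
lemma pw2: "(2::nat) ^ 2 = 4" by simp
lemma pw3: "(2::nat) ^ 3 = 8" by simp
lemma pw4: "(2::nat) ^ 4 = 16" by simp
lemma pw5: "(2::nat) ^ 5 = 32" by simp
lemma pw6: "(2::nat) ^ 6 = 64" by simp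
lemma pw7: "(2::nat) ^ 7 = 128" by simp
lemma pw8: "(2::nat) ^ 8 = 256" by simp
lemma pw9: "(2::nat) ^ 9 = 512" by simp
lemma pw10: "(2::nat) ^ 10 = 1024" by simp
lemma pw11: "(2::nat) ^ 11 = 2048" by simp
lemma pw12: "(2::nat) ^ 12 = 4096" by simp
lemma pw13: "(2::nat) ^ 13 = 8192" by simp
lemma pw14: "(2::nat) ^ 14 = 16384" by simp
lemma pw15: "(2::nat) ^ 15 = 32768" by simp
lemma pw16: "(2::nat) ^ 16 = 65536" by simp
lemma pw17: "(2::nat) ^ 17 = 131072" by simp
lemma pw18: "(2::nat) ^ 18 = 262144" by simp
lemma pw19: "(2::nat) ^ 19 = 524288" by simp
lemma pw20: "(2::nat) ^ 20 = 1048576" by simp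
lemma pw21: "(2::nat) ^ 21 = 2097152" by simp
lemma pw22: "(2::nat) ^ 22 = 4194304" by simp
lemma pw23: "(2::nat) ^ 23 = 8388608" by simp
lemma pw24: "(2::nat) ^ 24 = 16777216" by simp
lemma pw25: "(2::nat) ^ 25 = 33554432" by simp
lemma pw26: "(2::nat) ^ 26 = 67108864" by simp
lemma pw27: "(2::nat) ^ 27 = 134217728" by simp
lemma pw28: "(2::nat) ^ 28 = 268435456" by simp
lemma pw29: "(2::nat) ^ 29 = 536870912" by simp
lemma pw30: "(2::nat) ^ 30 = 1073741824" by simp
lemma pw31: "(2::nat) ^ 31 = 2147483648" by simp
lemma pw32: "(2::nat) ^ 32 = 4294967296" by simp
lemma pw33: "(2::nat) ^ 33 = 8589934592" by simp
lemma pw34: "(2::nat) ^ 34 = 17179869184" by simp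
lemma pw35: "(2::nat) ^ 35 = 34359738368" by simp
lemma pw36: "(2::nat) ^ 36 = 68719476736" by simp
lemma pw37: "(2::nat) ^ 37 = 137438953472" by simp
lemma pw38: "(2::nat) ^ 38 = 274877906944" by simp
lemma pw39: "(2::nat) ^ 39 = 549755813888" by simp
lemma pw40: "(2::nat) ^ 40 = 1099511627776" by simp
lemma pw41: "(2::nat) ^ 41 = 2199023255552" by simp
lemma pw42: "(2::nat) ^ 42 = 4398046511104" by simp
lemma pw43: "(2::nat) ^ 43 = 8796093022208" by simp
lemma pw44: "(2::nat) ^ 44 = 17592186044416" by simp
lemma pw45: "(2::nat) ^ 45 = 35184372088832" by simp
lemma pw46: "(2::nat) ^ 46 = 70368744177664" by simp
lemma pw47: "(2::nat) ^ 47 = 140737488355328" by simp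
lemma ev_rules:
  "xor 0 x = (x::nat)" "xor x 0 = (x::nat)" "xor (1::nat) 1 = 0"
  "and 0 x = (0::nat)" "and x 0 = (0::nat)" "and (1::nat) 1 = 1"
  "or 0 x = (x::nat)" "or x 0 = (x::nat)" "or (1::nat) 1 = 1"
  "2 * numeral k = (numeral (Num.Bit0 k) :: nat)" "1 + numeral (Num.Bit0 k) = (numeral (Num.Bit1 k) :: nat)"
  "2 * (0::nat) = 0" "1 + (0::nat) = 1" "2 * (1::nat) = 2"
  "odd (numeral (Num.Bit1 k) :: nat) = True" "odd (numeral (Num.Bit0 k) :: nat) = False"
  "odd (1::nat) = True" "odd (0::nat) = False"
  "numeral (Num.Bit0 k) div 2 = (numeral k :: nat)" "numeral (Num.Bit1 k) div 2 = (numeral k :: nat)"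
  "(1::nat) div 2 = 0" "(0::nat) div 2 = 0"
  by simp_all

lemmas evr = ev_rules and_numerals or_numerals xor_numerals
  list.map xsel.simps imgm.simps maskL.simps distinct.simps list.set insert_iff empty_iff
  if_True if_False list.inject simp_thms numeral_eq_iff num.inject num.distinct numeral_eq_one_iff
  one_eq_numeral_iff numeral_neq_zero zero_neq_numeral zero_neq_one one_neq_zero numeral_less_iff less_num_simps
  list.pred_inject prod.case
  numeral_One pw0 pw1 pw2 pw3 pw4 pw5 pw6 pw7 pw8 pw9 pw10 pw11 pw12 pw13 pw14 pw15 pw16 pw17 pw18 pw19 pw20 pw21 pw22 pw23 pw24 pw25 pw26 pw27 pw28 pw29 pw30 pw31 pw32 pw33 pw34 pw35 pw36 pw37 pw38 pw39 pw40 pw41 pw42 pw43 pw44 pw45 pw46 pw47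

definition TB0 :: "(nat \<times> nat \<times> nat list \<times> nat list \<times> nat list) list" where
  "TB0 = [
(187649984473770, 24, [1, 3, 5, 7, 9, 11, 13, 15, 17, 19, 21, 23, 25, 27, 29, 31, 33, 35, 37, 39, 41, 43, 45, 47], [1, 2, 4, 7, 15, 23, 39], [1, 2, 4, 23, 39, 71, 7]),
(225179981368524, 24, [2, 3, 6, 7, 10, 11, 14, 15, 18, 19, 22, 23, 26, 27, 30, 31, 34, 35, 38, 39, 42, 43, 46, 47], [1, 2, 4, 7, 15, 23, 71], [1, 2, 4, 23, 39, 7, 71]),
(112589990684262, 24, [1, 2, 5, 6, 9, 10, 13, 14, 17, 18, 21, 22, 25, 26, 29, 30, 33, 34, 37, 38, 41, 42, 45, 46], [1, 2, 4, 7, 15, 23, 39], [1, 2, 4, 23, 39, 71, 64]),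
(264917625139440, 24, [4, 5, 6, 7, 12, 13, 14, 15, 20, 21, 22, 23, 28, 29, 30, 31, 36, 37, 38, 39, 44, 45, 46, 47], [1, 2, 4, 7, 15, 39, 71], [1, 2, 4, 23, 7, 39, 71]),
(99344109427290, 24, [1, 3, 4, 6, 9, 11, 12, 14, 17, 19, 20, 22, 25, 27, 28, 30, 33, 35, 36, 38, 41, 43, 44, 46], [1, 2, 4, 7, 15, 23, 39], [1, 2, 4, 23, 39, 71, 32]),
(66229406284860, 24, [2, 3, 4, 5, 10, 11, 12, 13, 18, 19, 20, 21, 26, 27, 28, 29, 34, 35, 36, 37, 42, 43, 44, 45], [1, 2, 4, 7, 15, 23, 71], [1, 2, 4, 23, 39, 32, 71])]"

lemma TB0_len: "list_all (\<lambda>(nb, m, p, sa, sb). length p = m \<and> (m = 16 \<or> m = 24 \<or> m = 32)) TB0"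
  by (simp add: TB0_def)

lemma TB0_ok: "list_all (\<lambda>(nb, m, p, sa, sb). chkb (Hsel m) nb p sa sb) TB0"
  unfolding TB0_def chkb_def Hsel_def H16N_def H24N_def H32N_def Dnums_def by (simp only: evr cong: if_weak_cong)

definition TB1 :: "(nat \<times> nat \<times> nat list \<times> nat list \<times> nat list) list" where
  "TB1 = [
(165573515712150, 24, [1, 2, 4, 7, 9, 10, 12, 15, 17, 18, 20, 23, 25, 26, 28, 31, 33, 34, 36, 39, 41, 42, 44, 47], [1, 2, 4, 7, 15, 23, 39], [1, 2, 4, 23, 39, 71, 103]),
(280379743338240, 24, [8, 9, 10, 11, 12, 13, 14, 15, 24, 25, 26, 27, 28, 29, 30, 31, 40, 41, 42, 43, 44, 45, 46, 47], [1, 2, 4, 7, 23, 39, 71], [1, 2, 4, 7, 23, 39, 71]),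
(94190070027690, 24, [1, 3, 5, 7, 8, 10, 12, 14, 17, 19, 21, 23, 24, 26, 28, 30, 33, 35, 37, 39, 40, 42, 44, 46], [1, 2, 4, 7, 15, 23, 39], [1, 2, 4, 23, 39, 71, 16]),
(56952135365580, 24, [2, 3, 6, 7, 8, 9, 12, 13, 18, 19, 22, 23, 24, 25, 28, 29, 34, 35, 38, 39, 40, 41, 44, 45], [1, 2, 4, 7, 15, 23, 71], [1, 2, 4, 23, 39, 16, 71]),
(168665939351910, 24, [1, 2, 5, 6, 8, 11, 12, 15, 17, 18, 21, 22, 24, 27, 28, 31, 33, 34, 37, 38, 40, 43, 44, 47], [1, 2, 4, 7, 15, 23, 39], [1, 2, 4, 23, 39, 71, 87]),
(17523733958640, 24, [4, 5, 6, 7, 8, 9, 10, 11, 20, 21, 22, 23, 24, 25, 26, 27, 36, 37, 38, 39, 40, 41, 42, 43], [1, 2, 4, 7, 15, 39, 71], [1, 2, 4, 23, 16, 39, 71])]"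

lemma TB1_len: "list_all (\<lambda>(nb, m, p, sa, sb). length p = m \<and> (m = 16 \<or> m = 24 \<or> m = 32)) TB1"
  by (simp add: TB1_def)

lemma TB1_ok: "list_all (\<lambda>(nb, m, p, sa, sb). chkb (Hsel m) nb p sa sb) TB1"
  unfolding TB1_def chkb_def Hsel_def H16N_def H24N_def H32N_def Dnums_def by (simp only: evr cong: if_weak_cong)

definition TB2 :: "(nat \<times> nat \<times> nat list \<times> nat list \<times> nat list) list" where
  "TB2 = [
(181808739820890, 24, [1, 3, 4, 6, 8, 10, 13, 15, 17, 19, 20, 22, 24, 26, 29, 31, 33, 35, 36, 38, 40, 42, 45, 47], [1, 2, 4, 7, 15, 23, 39], [1, 2, 4, 23, 39, 71, 55]),
(214665740993340, 24, [2, 3, 4, 5, 8, 9, 14, 15, 18, 19, 20, 21, 24, 25, 30, 31, 34, 35, 36, 37, 40, 41, 46, 47], [1, 2, 4, 7, 15, 23, 71], [1, 2, 4, 23, 39, 55, 71]),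
(116094737475990, 24, [1, 2, 4, 7, 8, 11, 13, 14, 17, 18, 20, 23, 24, 27, 29, 30, 33, 34, 36, 39, 40, 43, 45, 46], [1, 2, 4, 7, 15, 23, 39], [1, 2, 4, 23, 39, 71, 112]),
(281470681743360, 16, [32, 33, 34, 35, 36, 37, 38, 39, 40, 41, 42, 43, 44, 45, 46, 47], [64, 32, 16, 8, 4], [0, 0, 16, 8, 4, 2, 1]),
(93826423892650, 24, [1, 3, 5, 7, 9, 11, 13, 15, 17, 19, 21, 23, 25, 27, 29, 31, 32, 34, 36, 38, 40, 42, 44, 46], [1, 2, 4, 7, 15, 23, 39], [1, 2, 4, 23, 39, 71, 3]),
(56297572322508, 24, [2, 3, 6, 7, 10, 11, 14, 15, 18, 19, 22, 23, 26, 27, 30, 31, 32, 33, 36, 37, 40, 41, 44, 45], [1, 2, 4, 7, 15, 23, 71], [1, 2, 4, 23, 39, 3, 71])]"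

lemma TB2_len: "list_all (\<lambda>(nb, m, p, sa, sb). length p = m \<and> (m = 16 \<or> m = 24 \<or> m = 32)) TB2"
  by (simp add: TB2_def)

lemma TB2_ok: "list_all (\<lambda>(nb, m, p, sa, sb). chkb (Hsel m) nb p sa sb) TB2"
  unfolding TB2_def chkb_def Hsel_def H16N_def H24N_def H32N_def Dnums_def by (simp only: evr cong: if_weak_cong)

definition TB3 :: "(nat \<times> nat \<times> nat list \<times> nat list \<times> nat list) list" where
  "TB3 = [
(168884127032934, 24, [1, 2, 5, 6, 9, 10, 13, 14, 17, 18, 21, 22, 25, 26, 29, 30, 32, 35, 36, 39, 40, 43, 44, 47], [1, 2, 4, 7, 15, 23, 39], [1, 2, 4, 23, 39, 71, 68]),
(16561141248240, 24, [4, 5, 6, 7, 12, 13, 14, 15, 20, 21, 22, 23, 28, 29, 30, 31, 32, 33, 34, 35, 40, 41, 42, 43], [1, 2, 4, 7, 15, 39, 71], [1, 2, 4, 23, 3, 39, 71]),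
(182129604057690, 24, [1, 3, 4, 6, 9, 11, 12, 14, 17, 19, 20, 22, 25, 27, 28, 30, 32, 34, 37, 39, 40, 42, 45, 47], [1, 2, 4, 7, 15, 23, 39], [1, 2, 4, 23, 39, 71, 36]),
(215243296619580, 24, [2, 3, 4, 5, 10, 11, 12, 13, 18, 19, 20, 21, 26, 27, 28, 29, 32, 33, 38, 39, 40, 41, 46, 47], [1, 2, 4, 7, 15, 23, 71], [1, 2, 4, 23, 39, 36, 71]),
(115902218933910, 24, [1, 2, 4, 7, 9, 10, 12, 15, 17, 18, 20, 23, 25, 26, 28, 31, 32, 35, 37, 38, 40, 43, 45, 46], [1, 2, 4, 7, 15, 23, 39], [1, 2, 4, 23, 39, 71, 99]),
(1099494915840, 24, [8, 9, 10, 11, 12, 13, 14, 15, 24, 25, 26, 27, 28, 29, 30, 31, 32, 33, 34, 35, 36, 37, 38, 39], [1, 2, 4, 7, 23, 39, 71], [1, 2, 4, 3, 23, 39, 71])]"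

lemma TB3_len: "list_all (\<lambda>(nb, m, p, sa, sb). length p = m \<and> (m = 16 \<or> m = 24 \<or> m = 32)) TB3"
  by (simp add: TB3_def)

lemma TB3_ok: "list_all (\<lambda>(nb, m, p, sa, sb). chkb (Hsel m) nb p sa sb) TB3"
  unfolding TB3_def chkb_def Hsel_def H16N_def H24N_def H32N_def Dnums_def by (simp only: evr cong: if_weak_cong)

definition TB4 :: "(nat \<times> nat \<times> nat list \<times> nat list \<times> nat list) list" where
  "TB4 = [
(187283486168490, 24, [1, 3, 5, 7, 8, 10, 12, 14, 17, 19, 21, 23, 24, 26, 28, 30, 32, 34, 36, 38, 41, 43, 45, 47], [1, 2, 4, 7, 15, 23, 39], [1, 2, 4, 23, 39, 71, 20]),
(224520284419020, 24, [2, 3, 6, 7, 8, 9, 12, 13, 18, 19, 22, 23, 24, 25, 28, 29, 32, 33, 36, 37, 42, 43, 46, 47], [1, 2, 4, 7, 15, 23, 71], [1, 2, 4, 23, 39, 20, 71]),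
(112809889667430, 24, [1, 2, 5, 6, 8, 11, 12, 15, 17, 18, 21, 22, 24, 27, 28, 31, 32, 35, 36, 39, 41, 42, 45, 46], [1, 2, 4, 7, 15, 23, 39], [1, 2, 4, 23, 39, 71, 83]),
(263947482566640, 24, [4, 5, 6, 7, 8, 9, 10, 11, 20, 21, 22, 23, 24, 25, 26, 27, 32, 33, 34, 35, 44, 45, 46, 47], [1, 2, 4, 7, 15, 39, 71], [1, 2, 4, 23, 20, 39, 71]),
(99667490284890, 24, [1, 3, 4, 6, 8, 10, 13, 15, 17, 19, 20, 22, 24, 26, 29, 31, 32, 34, 37, 39, 41, 43, 44, 46], [1, 2, 4, 7, 15, 23, 39], [1, 2, 4, 23, 39, 71, 51]),
(66811491828540, 24, [2, 3, 4, 5, 8, 9, 14, 15, 18, 19, 20, 21, 24, 25, 30, 31, 32, 33, 38, 39, 42, 43, 44, 45], [1, 2, 4, 7, 15, 23, 71], [1, 2, 4, 23, 39, 51, 71])]"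

lemma TB4_len: "list_all (\<lambda>(nb, m, p, sa, sb). length p = m \<and> (m = 16 \<or> m = 24 \<or> m = 32)) TB4"
  by (simp add: TB4_def)

lemma TB4_ok: "list_all (\<lambda>(nb, m, p, sa, sb). chkb (Hsel m) nb p sa sb) TB4"
  unfolding TB4_def chkb_def Hsel_def H16N_def H24N_def H32N_def Dnums_def by (simp only: evr cong: if_weak_cong)

definition TB5 :: "(nat \<times> nat \<times> nat list \<times> nat list \<times> nat list) list" where
  "TB5 = [
(165379487197590, 24, [1, 2, 4, 7, 8, 11, 13, 14, 17, 18, 20, 23, 24, 27, 29, 30, 32, 35, 37, 38, 41, 42, 44, 47], [1, 2, 4, 7, 15, 23, 39], [1, 2, 4, 23, 39, 71, 116]),
(4294901760, 16, [16, 17, 18, 19, 20, 21, 22, 23, 24, 25, 26, 27, 28, 29, 30, 31], [64, 32, 16, 8, 2], [0, 16, 0, 8, 4, 2, 1]),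
(187648552839850, 24, [1, 3, 5, 7, 9, 11, 13, 15, 16, 18, 20, 22, 24, 26, 28, 30, 33, 35, 37, 39, 41, 43, 45, 47], [1, 2, 4, 7, 15, 23, 39], [1, 2, 4, 23, 39, 71, 5]),
(225177404427468, 24, [2, 3, 6, 7, 10, 11, 14, 15, 16, 17, 20, 21, 24, 25, 28, 29, 34, 35, 38, 39, 42, 43, 46, 47], [1, 2, 4, 7, 15, 23, 71], [1, 2, 4, 23, 39, 5, 71]),
(112590849664614, 24, [1, 2, 5, 6, 9, 10, 13, 14, 16, 19, 20, 23, 24, 27, 28, 31, 33, 34, 37, 38, 41, 42, 45, 46], [1, 2, 4, 7, 15, 23, 39], [1, 2, 4, 23, 39, 71, 66]),
(264913835520240, 24, [4, 5, 6, 7, 12, 13, 14, 15, 16, 17, 18, 19, 24, 25, 26, 27, 36, 37, 38, 39, 44, 45, 46, 47], [1, 2, 4, 7, 15, 39, 71], [1, 2, 4, 23, 5, 39, 71])]"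

lemma TB5_len: "list_all (\<lambda>(nb, m, p, sa, sb). length p = m \<and> (m = 16 \<or> m = 24 \<or> m = 32)) TB5"
  by (simp add: TB5_def)

lemma TB5_ok: "list_all (\<lambda>(nb, m, p, sa, sb). chkb (Hsel m) nb p sa sb) TB5"
  unfolding TB5_def chkb_def Hsel_def H16N_def H24N_def H32N_def Dnums_def by (simp only: evr cong: if_weak_cong)

definition TB6 :: "(nat \<times> nat \<times> nat list \<times> nat list \<times> nat list) list" where
  "TB6 = [
(99345372633690, 24, [1, 3, 4, 6, 9, 11, 12, 14, 16, 18, 21, 23, 24, 26, 29, 31, 33, 35, 36, 38, 41, 43, 44, 46], [1, 2, 4, 7, 15, 23, 39], [1, 2, 4, 23, 39, 71, 34]),
(66231680056380, 24, [2, 3, 4, 5, 10, 11, 12, 13, 16, 17, 22, 23, 24, 25, 30, 31, 34, 35, 36, 37, 42, 43, 44, 45], [1, 2, 4, 7, 15, 23, 71], [1, 2, 4, 23, 39, 34, 71]),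
(165572757788310, 24, [1, 2, 4, 7, 9, 10, 12, 15, 16, 19, 21, 22, 24, 27, 29, 30, 33, 34, 36, 39, 41, 42, 44, 47], [1, 2, 4, 7, 15, 23, 39], [1, 2, 4, 23, 39, 71, 101]),
(280375481859840, 24, [8, 9, 10, 11, 12, 13, 14, 15, 16, 17, 18, 19, 20, 21, 22, 23, 40, 41, 42, 43, 44, 45, 46, 47], [1, 2, 4, 7, 23, 39, 71], [1, 2, 4, 5, 23, 39, 71]),
(94191490520490, 24, [1, 3, 5, 7, 8, 10, 12, 14, 16, 18, 20, 22, 25, 27, 29, 31, 33, 35, 37, 39, 40, 42, 44, 46], [1, 2, 4, 7, 15, 23, 39], [1, 2, 4, 23, 39, 71, 18]),
(56954692252620, 24, [2, 3, 6, 7, 8, 9, 12, 13, 16, 17, 20, 21, 26, 27, 30, 31, 34, 35, 38, 39, 40, 41, 44, 45], [1, 2, 4, 7, 15, 23, 71], [1, 2, 4, 23, 39, 18, 71])]"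

lemma TB6_len: "list_all (\<lambda>(nb, m, p, sa, sb). length p = m \<and> (m = 16 \<or> m = 24 \<or> m = 32)) TB6"
  by (simp add: TB6_def)

lemma TB6_ok: "list_all (\<lambda>(nb, m, p, sa, sb). chkb (Hsel m) nb p sa sb) TB6"
  unfolding TB6_def chkb_def Hsel_def H16N_def H24N_def H32N_def Dnums_def by (simp only: evr cong: if_weak_cong)

definition TB7 :: "(nat \<times> nat \<times> nat list \<times> nat list \<times> nat list) list" where
  "TB7 = [
(168665087056230, 24, [1, 2, 5, 6, 8, 11, 12, 15, 16, 19, 20, 23, 25, 26, 29, 30, 33, 34, 37, 38, 40, 43, 44, 47], [1, 2, 4, 7, 15, 23, 39], [1, 2, 4, 23, 39, 71, 85]),
(17527494086640, 24, [4, 5, 6, 7, 8, 9, 10, 11, 16, 17, 18, 19, 28, 29, 30, 31, 36, 37, 38, 39, 40, 41, 42, 43], [1, 2, 4, 7, 15, 39, 71], [1, 2, 4, 23, 18, 39, 71]),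
(181807486444890, 24, [1, 3, 4, 6, 8, 10, 13, 15, 16, 18, 21, 23, 25, 27, 28, 30, 33, 35, 36, 38, 40, 42, 45, 47], [1, 2, 4, 7, 15, 23, 39], [1, 2, 4, 23, 39, 71, 53]),
(214663484916540, 24, [2, 3, 4, 5, 8, 9, 14, 15, 16, 17, 22, 23, 26, 27, 28, 29, 34, 35, 36, 37, 40, 41, 46, 47], [1, 2, 4, 7, 15, 23, 71], [1, 2, 4, 23, 39, 53, 71]),
(116095489501590, 24, [1, 2, 4, 7, 8, 11, 13, 14, 16, 19, 21, 22, 25, 26, 28, 31, 33, 34, 36, 39, 40, 43, 45, 46], [1, 2, 4, 7, 15, 23, 39], [1, 2, 4, 23, 39, 71, 114]),
(281474976645120, 32, [16, 17, 18, 19, 20, 21, 22, 23, 24, 25, 26, 27, 28, 29, 30, 31, 32, 33, 34, 35, 36, 37, 38, 39, 40, 41, 42, 43, 44, 45, 46, 47], [64, 32, 16, 8, 4, 6], [0, 48, 16, 8, 4, 2, 1])]"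

lemma TB7_len: "list_all (\<lambda>(nb, m, p, sa, sb). length p = m \<and> (m = 16 \<or> m = 24 \<or> m = 32)) TB7"
  by (simp add: TB7_def)

lemma TB7_ok: "list_all (\<lambda>(nb, m, p, sa, sb). chkb (Hsel m) nb p sa sb) TB7"
  unfolding TB7_def chkb_def Hsel_def H16N_def H24N_def H32N_def Dnums_def by (simp only: evr cong: if_weak_cong)

definition TB8 :: "(nat \<times> nat \<times> nat list \<times> nat list \<times> nat list) list" where
  "TB8 = [
(93824992258730, 24, [1, 3, 5, 7, 9, 11, 13, 15, 16, 18, 20, 22, 24, 26, 28, 30, 32, 34, 36, 38, 40, 42, 44, 46], [1, 2, 4, 7, 15, 23, 39], [1, 2, 4, 23, 39, 71, 1]),
(56294995381452, 24, [2, 3, 6, 7, 10, 11, 14, 15, 16, 17, 20, 21, 24, 25, 28, 29, 32, 33, 36, 37, 40, 41, 44, 45], [1, 2, 4, 7, 15, 23, 71], [1, 2, 4, 23, 39, 1, 71]),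
(168884986013286, 24, [1, 2, 5, 6, 9, 10, 13, 14, 16, 19, 20, 23, 24, 27, 28, 31, 32, 35, 36, 39, 40, 43, 44, 47], [1, 2, 4, 7, 15, 23, 39], [1, 2, 4, 23, 39, 71, 70]),
(16557351629040, 24, [4, 5, 6, 7, 12, 13, 14, 15, 16, 17, 18, 19, 24, 25, 26, 27, 32, 33, 34, 35, 40, 41, 42, 43], [1, 2, 4, 7, 15, 39, 71], [1, 2, 4, 23, 1, 39, 71]),
(182130867264090, 24, [1, 3, 4, 6, 9, 11, 12, 14, 16, 18, 21, 23, 24, 26, 29, 31, 32, 34, 37, 39, 40, 42, 45, 47], [1, 2, 4, 7, 15, 23, 39], [1, 2, 4, 23, 39, 71, 38]),
(215245570391100, 24, [2, 3, 4, 5, 10, 11, 12, 13, 16, 17, 22, 23, 24, 25, 30, 31, 32, 33, 38, 39, 40, 41, 46, 47], [1, 2, 4, 7, 15, 23, 71], [1, 2, 4, 23, 39, 38, 71])]"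

lemma TB8_len: "list_all (\<lambda>(nb, m, p, sa, sb). length p = m \<and> (m = 16 \<or> m = 24 \<or> m = 32)) TB8"
  by (simp add: TB8_def)

lemma TB8_ok: "list_all (\<lambda>(nb, m, p, sa, sb). chkb (Hsel m) nb p sa sb) TB8"
  unfolding TB8_def chkb_def Hsel_def H16N_def H24N_def H32N_def Dnums_def by (simp only: evr cong: if_weak_cong)

definition TB9 :: "(nat \<times> nat \<times> nat list \<times> nat list \<times> nat list) list" where
  "TB9 = [
(115901461010070, 24, [1, 2, 4, 7, 9, 10, 12, 15, 16, 19, 21, 22, 24, 27, 29, 30, 32, 35, 37, 38, 40, 43, 45, 46], [1, 2, 4, 7, 15, 23, 39], [1, 2, 4, 23, 39, 71, 97]),
(1095233437440, 24, [8, 9, 10, 11, 12, 13, 14, 15, 16, 17, 18, 19, 20, 21, 22, 23, 32, 33, 34, 35, 36, 37, 38, 39], [1, 2, 4, 7, 23, 39, 71], [1, 2, 4, 1, 23, 39, 71]),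
(187284906661290, 24, [1, 3, 5, 7, 8, 10, 12, 14, 16, 18, 20, 22, 25, 27, 29, 31, 32, 34, 36, 38, 41, 43, 45, 47], [1, 2, 4, 7, 15, 23, 39], [1, 2, 4, 23, 39, 71, 22]),
(224522841306060, 24, [2, 3, 6, 7, 8, 9, 12, 13, 16, 17, 20, 21, 26, 27, 30, 31, 32, 33, 36, 37, 42, 43, 46, 47], [1, 2, 4, 7, 15, 23, 71], [1, 2, 4, 23, 39, 22, 71]),
(112809037371750, 24, [1, 2, 5, 6, 8, 11, 12, 15, 16, 19, 20, 23, 25, 26, 29, 30, 32, 35, 36, 39, 41, 42, 45, 46], [1, 2, 4, 7, 15, 23, 39], [1, 2, 4, 23, 39, 71, 81]),
(263951242694640, 24, [4, 5, 6, 7, 8, 9, 10, 11, 16, 17, 18, 19, 28, 29, 30, 31, 32, 33, 34, 35, 44, 45, 46, 47], [1, 2, 4, 7, 15, 39, 71], [1, 2, 4, 23, 22, 39, 71])]"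

lemma TB9_len: "list_all (\<lambda>(nb, m, p, sa, sb). length p = m \<and> (m = 16 \<or> m = 24 \<or> m = 32)) TB9"
  by (simp add: TB9_def)

lemma TB9_ok: "list_all (\<lambda>(nb, m, p, sa, sb). chkb (Hsel m) nb p sa sb) TB9"
  unfolding TB9_def chkb_def Hsel_def H16N_def H24N_def H32N_def Dnums_def by (simp only: evr cong: if_weak_cong)

definition TB10 :: "(nat \<times> nat \<times> nat list \<times> nat list \<times> nat list) list" where
  "TB10 = [
(99666236908890, 24, [1, 3, 4, 6, 8, 10, 13, 15, 16, 18, 21, 23, 25, 27, 28, 30, 32, 34, 37, 39, 41, 43, 44, 46], [1, 2, 4, 7, 15, 23, 39], [1, 2, 4, 23, 39, 71, 49]),
(66809235751740, 24, [2, 3, 4, 5, 8, 9, 14, 15, 16, 17, 22, 23, 26, 27, 28, 29, 32, 33, 38, 39, 42, 43, 44, 45], [1, 2, 4, 7, 15, 23, 71], [1, 2, 4, 23, 39, 49, 71]),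
(165380239223190, 24, [1, 2, 4, 7, 8, 11, 13, 14, 16, 19, 21, 22, 25, 26, 28, 31, 32, 35, 37, 38, 41, 42, 44, 47], [1, 2, 4, 7, 15, 23, 39], [1, 2, 4, 23, 39, 71, 118]),
(65535, 16, [0, 1, 2, 3, 4, 5, 6, 7, 8, 9, 10, 11, 12, 13, 14, 15], [64, 32, 16, 8, 1], [16, 0, 0, 8, 4, 2, 1]),
(187649984451925, 24, [0, 2, 4, 6, 8, 10, 12, 14, 17, 19, 21, 23, 25, 27, 29, 31, 33, 35, 37, 39, 41, 43, 45, 47], [1, 2, 4, 7, 15, 23, 39], [1, 2, 4, 23, 39, 71, 6]),
(225179981329203, 24, [0, 1, 4, 5, 8, 9, 12, 13, 18, 19, 22, 23, 26, 27, 30, 31, 34, 35, 38, 39, 42, 43, 46, 47], [1, 2, 4, 7, 15, 23, 71], [1, 2, 4, 23, 39, 6, 71])]"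

lemma TB10_len: "list_all (\<lambda>(nb, m, p, sa, sb). length p = m \<and> (m = 16 \<or> m = 24 \<or> m = 32)) TB10"
  by (simp add: TB10_def)

lemma TB10_ok: "list_all (\<lambda>(nb, m, p, sa, sb). chkb (Hsel m) nb p sa sb) TB10"
  unfolding TB10_def chkb_def Hsel_def H16N_def H24N_def H32N_def Dnums_def by (simp only: evr cong: if_weak_cong)

definition TB11 :: "(nat \<times> nat \<times> nat list \<times> nat list \<times> nat list) list" where
  "TB11 = [
(112589990697369, 24, [0, 3, 4, 7, 8, 11, 12, 15, 17, 18, 21, 22, 25, 26, 29, 30, 33, 34, 37, 38, 41, 42, 45, 46], [1, 2, 4, 7, 15, 23, 39], [1, 2, 4, 23, 39, 71, 65]),
(264917625081615, 24, [0, 1, 2, 3, 8, 9, 10, 11, 20, 21, 22, 23, 28, 29, 30, 31, 36, 37, 38, 39, 44, 45, 46, 47], [1, 2, 4, 7, 15, 39, 71], [1, 2, 4, 23, 6, 39, 71]),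
(99344109446565, 24, [0, 2, 5, 7, 8, 10, 13, 15, 17, 19, 20, 22, 25, 27, 28, 30, 33, 35, 36, 38, 41, 43, 44, 46], [1, 2, 4, 7, 15, 23, 39], [1, 2, 4, 23, 39, 71, 33]),
(66229406319555, 24, [0, 1, 6, 7, 8, 9, 14, 15, 18, 19, 20, 21, 26, 27, 28, 29, 34, 35, 36, 37, 42, 43, 44, 45], [1, 2, 4, 7, 15, 23, 71], [1, 2, 4, 23, 39, 33, 71]),
(165573515700585, 24, [0, 3, 5, 6, 8, 11, 13, 14, 17, 18, 20, 23, 25, 26, 28, 31, 33, 34, 36, 39, 41, 42, 44, 47], [1, 2, 4, 7, 15, 23, 39], [1, 2, 4, 23, 39, 71, 102]),
(280379743273215, 24, [0, 1, 2, 3, 4, 5, 6, 7, 24, 25, 26, 27, 28, 29, 30, 31, 40, 41, 42, 43, 44, 45, 46, 47], [1, 2, 4, 7, 23, 39, 71], [1, 2, 4, 6, 23, 39, 71])]"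

lemma TB11_len: "list_all (\<lambda>(nb, m, p, sa, sb). length p = m \<and> (m = 16 \<or> m = 24 \<or> m = 32)) TB11"
  by (simp add: TB11_def)

lemma TB11_ok: "list_all (\<lambda>(nb, m, p, sa, sb). chkb (Hsel m) nb p sa sb) TB11"
  unfolding TB11_def chkb_def Hsel_def H16N_def H24N_def H32N_def Dnums_def by (simp only: evr cong: if_weak_cong)

definition TB12 :: "(nat \<times> nat \<times> nat list \<times> nat list \<times> nat list) list" where
  "TB12 = [
(94190070049365, 24, [0, 2, 4, 6, 9, 11, 13, 15, 17, 19, 21, 23, 24, 26, 28, 30, 33, 35, 37, 39, 40, 42, 44, 46], [1, 2, 4, 7, 15, 23, 39], [1, 2, 4, 23, 39, 71, 17]),
(56952135404595, 24, [0, 1, 4, 5, 10, 11, 14, 15, 18, 19, 22, 23, 24, 25, 28, 29, 34, 35, 38, 39, 40, 41, 44, 45], [1, 2, 4, 7, 15, 23, 71], [1, 2, 4, 23, 39, 17, 71]),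
(168665939338905, 24, [0, 3, 4, 7, 9, 10, 13, 14, 17, 18, 21, 22, 24, 27, 28, 31, 33, 34, 37, 38, 40, 43, 44, 47], [1, 2, 4, 7, 15, 23, 39], [1, 2, 4, 23, 39, 71, 86]),
(17523734016015, 24, [0, 1, 2, 3, 12, 13, 14, 15, 20, 21, 22, 23, 24, 25, 26, 27, 36, 37, 38, 39, 40, 41, 42, 43], [1, 2, 4, 7, 15, 39, 71], [1, 2, 4, 23, 17, 39, 71]),
(181808739801765, 24, [0, 2, 5, 7, 9, 11, 12, 14, 17, 19, 20, 22, 24, 26, 29, 31, 33, 35, 36, 38, 40, 42, 45, 47], [1, 2, 4, 7, 15, 23, 39], [1, 2, 4, 23, 39, 71, 54]),
(214665740958915, 24, [0, 1, 6, 7, 10, 11, 12, 13, 18, 19, 20, 21, 24, 25, 30, 31, 34, 35, 36, 37, 40, 41, 46, 47], [1, 2, 4, 7, 15, 23, 71], [1, 2, 4, 23, 39, 54, 71])]"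

lemma TB12_len: "list_all (\<lambda>(nb, m, p, sa, sb). length p = m \<and> (m = 16 \<or> m = 24 \<or> m = 32)) TB12"
  by (simp add: TB12_def)

lemma TB12_ok: "list_all (\<lambda>(nb, m, p, sa, sb). chkb (Hsel m) nb p sa sb) TB12"
  unfolding TB12_def chkb_def Hsel_def H16N_def H24N_def H32N_def Dnums_def by (simp only: evr cong: if_weak_cong)

definition TB13 :: "(nat \<times> nat \<times> nat list \<times> nat list \<times> nat list) list" where
  "TB13 = [
(116094737487465, 24, [0, 3, 5, 6, 9, 10, 12, 15, 17, 18, 20, 23, 24, 27, 29, 30, 33, 34, 36, 39, 40, 43, 45, 46], [1, 2, 4, 7, 15, 23, 39], [1, 2, 4, 23, 39, 71, 113]),
(281470681808895, 32, [0, 1, 2, 3, 4, 5, 6, 7, 8, 9, 10, 11, 12, 13, 14, 15, 32, 33, 34, 35, 36, 37, 38, 39, 40, 41, 42, 43, 44, 45, 46, 47], [64, 32, 16, 8, 4, 5], [48, 0, 16, 8, 4, 2, 1]),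
(93826423870805, 24, [0, 2, 4, 6, 8, 10, 12, 14, 17, 19, 21, 23, 25, 27, 29, 31, 32, 34, 36, 38, 40, 42, 44, 46], [1, 2, 4, 7, 15, 23, 39], [1, 2, 4, 23, 39, 71, 2]),
(56297572283187, 24, [0, 1, 4, 5, 8, 9, 12, 13, 18, 19, 22, 23, 26, 27, 30, 31, 32, 33, 36, 37, 40, 41, 44, 45], [1, 2, 4, 7, 15, 23, 71], [1, 2, 4, 23, 39, 2, 71]),
(168884127046041, 24, [0, 3, 4, 7, 8, 11, 12, 15, 17, 18, 21, 22, 25, 26, 29, 30, 32, 35, 36, 39, 40, 43, 44, 47], [1, 2, 4, 7, 15, 23, 39], [1, 2, 4, 23, 39, 71, 69]),
(16561141190415, 24, [0, 1, 2, 3, 8, 9, 10, 11, 20, 21, 22, 23, 28, 29, 30, 31, 32, 33, 34, 35, 40, 41, 42, 43], [1, 2, 4, 7, 15, 39, 71], [1, 2, 4, 23, 2, 39, 71])]"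

lemma TB13_len: "list_all (\<lambda>(nb, m, p, sa, sb). length p = m \<and> (m = 16 \<or> m = 24 \<or> m = 32)) TB13"
  by (simp add: TB13_def)

lemma TB13_ok: "list_all (\<lambda>(nb, m, p, sa, sb). chkb (Hsel m) nb p sa sb) TB13"
  unfolding TB13_def chkb_def Hsel_def H16N_def H24N_def H32N_def Dnums_def by (simp only: evr cong: if_weak_cong)

definition TB14 :: "(nat \<times> nat \<times> nat list \<times> nat list \<times> nat list) list" where
  "TB14 = [
(182129604076965, 24, [0, 2, 5, 7, 8, 10, 13, 15, 17, 19, 20, 22, 25, 27, 28, 30, 32, 34, 37, 39, 40, 42, 45, 47], [1, 2, 4, 7, 15, 23, 39], [1, 2, 4, 23, 39, 71, 37]),
(215243296654275, 24, [0, 1, 6, 7, 8, 9, 14, 15, 18, 19, 20, 21, 26, 27, 28, 29, 32, 33, 38, 39, 40, 41, 46, 47], [1, 2, 4, 7, 15, 23, 71], [1, 2, 4, 23, 39, 37, 71]),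
(115902218922345, 24, [0, 3, 5, 6, 8, 11, 13, 14, 17, 18, 20, 23, 25, 26, 28, 31, 32, 35, 37, 38, 40, 43, 45, 46], [1, 2, 4, 7, 15, 23, 39], [1, 2, 4, 23, 39, 71, 98]),
(1099494850815, 24, [0, 1, 2, 3, 4, 5, 6, 7, 24, 25, 26, 27, 28, 29, 30, 31, 32, 33, 34, 35, 36, 37, 38, 39], [1, 2, 4, 7, 23, 39, 71], [1, 2, 4, 2, 23, 39, 71]),
(187283486190165, 24, [0, 2, 4, 6, 9, 11, 13, 15, 17, 19, 21, 23, 24, 26, 28, 30, 32, 34, 36, 38, 41, 43, 45, 47], [1, 2, 4, 7, 15, 23, 39], [1, 2, 4, 23, 39, 71, 21]),
(224520284458035, 24, [0, 1, 4, 5, 10, 11, 14, 15, 18, 19, 22, 23, 24, 25, 28, 29, 32, 33, 36, 37, 42, 43, 46, 47], [1, 2, 4, 7, 15, 23, 71], [1, 2, 4, 23, 39, 21, 71])]"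

lemma TB14_len: "list_all (\<lambda>(nb, m, p, sa, sb). length p = m \<and> (m = 16 \<or> m = 24 \<or> m = 32)) TB14"
  by (simp add: TB14_def)

lemma TB14_ok: "list_all (\<lambda>(nb, m, p, sa, sb). chkb (Hsel m) nb p sa sb) TB14"
  unfolding TB14_def chkb_def Hsel_def H16N_def H24N_def H32N_def Dnums_def by (simp only: evr cong: if_weak_cong)

definition TB15 :: "(nat \<times> nat \<times> nat list \<times> nat list \<times> nat list) list" where
  "TB15 = [
(112809889654425, 24, [0, 3, 4, 7, 9, 10, 13, 14, 17, 18, 21, 22, 24, 27, 28, 31, 32, 35, 36, 39, 41, 42, 45, 46], [1, 2, 4, 7, 15, 23, 39], [1, 2, 4, 23, 39, 71, 82]),
(263947482624015, 24, [0, 1, 2, 3, 12, 13, 14, 15, 20, 21, 22, 23, 24, 25, 26, 27, 32, 33, 34, 35, 44, 45, 46, 47], [1, 2, 4, 7, 15, 39, 71], [1, 2, 4, 23, 21, 39, 71]),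
(99667490265765, 24, [0, 2, 5, 7, 9, 11, 12, 14, 17, 19, 20, 22, 24, 26, 29, 31, 32, 34, 37, 39, 41, 43, 44, 46], [1, 2, 4, 7, 15, 23, 39], [1, 2, 4, 23, 39, 71, 50]),
(66811491794115, 24, [0, 1, 6, 7, 10, 11, 12, 13, 18, 19, 20, 21, 24, 25, 30, 31, 32, 33, 38, 39, 42, 43, 44, 45], [1, 2, 4, 7, 15, 23, 71], [1, 2, 4, 23, 39, 50, 71]),
(165379487209065, 24, [0, 3, 5, 6, 9, 10, 12, 15, 17, 18, 20, 23, 24, 27, 29, 30, 32, 35, 37, 38, 41, 42, 44, 47], [1, 2, 4, 7, 15, 23, 39], [1, 2, 4, 23, 39, 71, 117]),
(4294967295, 32, [0, 1, 2, 3, 4, 5, 6, 7, 8, 9, 10, 11, 12, 13, 14, 15, 16, 17, 18, 19, 20, 21, 22, 23, 24, 25, 26, 27, 28, 29, 30, 31], [64, 32, 16, 8, 2, 3], [48, 16, 0, 8, 4, 2, 1])]"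

lemma TB15_len: "list_all (\<lambda>(nb, m, p, sa, sb). length p = m \<and> (m = 16 \<or> m = 24 \<or> m = 32)) TB15"
  by (simp add: TB15_def)

lemma TB15_ok: "list_all (\<lambda>(nb, m, p, sa, sb). chkb (Hsel m) nb p sa sb) TB15"
  unfolding TB15_def chkb_def Hsel_def H16N_def H24N_def H32N_def Dnums_def by (simp only: evr cong: if_weak_cong)

definition TB16 :: "(nat \<times> nat \<times> nat list \<times> nat list \<times> nat list) list" where
  "TB16 = [
(187648552818005, 24, [0, 2, 4, 6, 8, 10, 12, 14, 16, 18, 20, 22, 24, 26, 28, 30, 33, 35, 37, 39, 41, 43, 45, 47], [1, 2, 4, 7, 15, 23, 39], [1, 2, 4, 23, 39, 71, 4]),
(225177404388147, 24, [0, 1, 4, 5, 8, 9, 12, 13, 16, 17, 20, 21, 24, 25, 28, 29, 34, 35, 38, 39, 42, 43, 46, 47], [1, 2, 4, 7, 15, 23, 71], [1, 2, 4, 23, 39, 4, 71]),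
(112590849677721, 24, [0, 3, 4, 7, 8, 11, 12, 15, 16, 19, 20, 23, 24, 27, 28, 31, 33, 34, 37, 38, 41, 42, 45, 46], [1, 2, 4, 7, 15, 23, 39], [1, 2, 4, 23, 39, 71, 67]),
(264913835462415, 24, [0, 1, 2, 3, 8, 9, 10, 11, 16, 17, 18, 19, 24, 25, 26, 27, 36, 37, 38, 39, 44, 45, 46, 47], [1, 2, 4, 7, 15, 39, 71], [1, 2, 4, 23, 4, 39, 71]),
(99345372652965, 24, [0, 2, 5, 7, 8, 10, 13, 15, 16, 18, 21, 23, 24, 26, 29, 31, 33, 35, 36, 38, 41, 43, 44, 46], [1, 2, 4, 7, 15, 23, 39], [1, 2, 4, 23, 39, 71, 35]),
(66231680091075, 24, [0, 1, 6, 7, 8, 9, 14, 15, 16, 17, 22, 23, 24, 25, 30, 31, 34, 35, 36, 37, 42, 43, 44, 45], [1, 2, 4, 7, 15, 23, 71], [1, 2, 4, 23, 39, 35, 71])]"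

lemma TB16_len: "list_all (\<lambda>(nb, m, p, sa, sb). length p = m \<and> (m = 16 \<or> m = 24 \<or> m = 32)) TB16"
  by (simp add: TB16_def)

lemma TB16_ok: "list_all (\<lambda>(nb, m, p, sa, sb). chkb (Hsel m) nb p sa sb) TB16"
  unfolding TB16_def chkb_def Hsel_def H16N_def H24N_def H32N_def Dnums_def by (simp only: evr cong: if_weak_cong)

definition TB17 :: "(nat \<times> nat \<times> nat list \<times> nat list \<times> nat list) list" where
  "TB17 = [
(165572757776745, 24, [0, 3, 5, 6, 8, 11, 13, 14, 16, 19, 21, 22, 24, 27, 29, 30, 33, 34, 36, 39, 41, 42, 44, 47], [1, 2, 4, 7, 15, 23, 39], [1, 2, 4, 23, 39, 71, 100]),
(280375481794815, 24, [0, 1, 2, 3, 4, 5, 6, 7, 16, 17, 18, 19, 20, 21, 22, 23, 40, 41, 42, 43, 44, 45, 46, 47], [1, 2, 4, 7, 23, 39, 71], [1, 2, 4, 4, 23, 39, 71]),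
(94191490542165, 24, [0, 2, 4, 6, 9, 11, 13, 15, 16, 18, 20, 22, 25, 27, 29, 31, 33, 35, 37, 39, 40, 42, 44, 46], [1, 2, 4, 7, 15, 23, 39], [1, 2, 4, 23, 39, 71, 19]),
(56954692291635, 24, [0, 1, 4, 5, 10, 11, 14, 15, 16, 17, 20, 21, 26, 27, 30, 31, 34, 35, 38, 39, 40, 41, 44, 45], [1, 2, 4, 7, 15, 23, 71], [1, 2, 4, 23, 39, 19, 71]),
(168665087043225, 24, [0, 3, 4, 7, 9, 10, 13, 14, 16, 19, 20, 23, 25, 26, 29, 30, 33, 34, 37, 38, 40, 43, 44, 47], [1, 2, 4, 7, 15, 23, 39], [1, 2, 4, 23, 39, 71, 84]),
(17527494144015, 24, [0, 1, 2, 3, 12, 13, 14, 15, 16, 17, 18, 19, 28, 29, 30, 31, 36, 37, 38, 39, 40, 41, 42, 43], [1, 2, 4, 7, 15, 39, 71], [1, 2, 4, 23, 19, 39, 71])]"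

lemma TB17_len: "list_all (\<lambda>(nb, m, p, sa, sb). length p = m \<and> (m = 16 \<or> m = 24 \<or> m = 32)) TB17"
  by (simp add: TB17_def)

lemma TB17_ok: "list_all (\<lambda>(nb, m, p, sa, sb). chkb (Hsel m) nb p sa sb) TB17"
  unfolding TB17_def chkb_def Hsel_def H16N_def H24N_def H32N_def Dnums_def by (simp only: evr cong: if_weak_cong)

definition TB18 :: "(nat \<times> nat \<times> nat list \<times> nat list \<times> nat list) list" where
  "TB18 = [
(181807486425765, 24, [0, 2, 5, 7, 9, 11, 12, 14, 16, 18, 21, 23, 25, 27, 28, 30, 33, 35, 36, 38, 40, 42, 45, 47], [1, 2, 4, 7, 15, 23, 39], [1, 2, 4, 23, 39, 71, 52]),
(214663484882115, 24, [0, 1, 6, 7, 10, 11, 12, 13, 16, 17, 22, 23, 26, 27, 28, 29, 34, 35, 36, 37, 40, 41, 46, 47], [1, 2, 4, 7, 15, 23, 71], [1, 2, 4, 23, 39, 52, 71]),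
(116095489513065, 24, [0, 3, 5, 6, 9, 10, 12, 15, 16, 19, 21, 22, 25, 26, 28, 31, 33, 34, 36, 39, 40, 43, 45, 46], [1, 2, 4, 7, 15, 23, 39], [1, 2, 4, 23, 39, 71, 115]),
(93824992236885, 24, [0, 2, 4, 6, 8, 10, 12, 14, 16, 18, 20, 22, 24, 26, 28, 30, 32, 34, 36, 38, 40, 42, 44, 46], [1, 2, 4, 7, 15, 23, 39], [1, 2, 4, 23, 39, 71, 0]),
(56294995342131, 24, [0, 1, 4, 5, 8, 9, 12, 13, 16, 17, 20, 21, 24, 25, 28, 29, 32, 33, 36, 37, 40, 41, 44, 45], [1, 2, 4, 7, 15, 23, 71], [1, 2, 4, 23, 39, 0, 71]),
(168884986026393, 24, [0, 3, 4, 7, 8, 11, 12, 15, 16, 19, 20, 23, 24, 27, 28, 31, 32, 35, 36, 39, 40, 43, 44, 47], [1, 2, 4, 7, 15, 23, 39], [1, 2, 4, 23, 39, 71, 71])]"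

lemma TB18_len: "list_all (\<lambda>(nb, m, p, sa, sb). length p = m \<and> (m = 16 \<or> m = 24 \<or> m = 32)) TB18"
  by (simp add: TB18_def)

lemma TB18_ok: "list_all (\<lambda>(nb, m, p, sa, sb). chkb (Hsel m) nb p sa sb) TB18"
  unfolding TB18_def chkb_def Hsel_def H16N_def H24N_def H32N_def Dnums_def by (simp only: evr cong: if_weak_cong)

definition TB19 :: "(nat \<times> nat \<times> nat list \<times> nat list \<times> nat list) list" where
  "TB19 = [
(16557351571215, 24, [0, 1, 2, 3, 8, 9, 10, 11, 16, 17, 18, 19, 24, 25, 26, 27, 32, 33, 34, 35, 40, 41, 42, 43], [1, 2, 4, 7, 15, 39, 71], [1, 2, 4, 23, 0, 39, 71]),
(182130867283365, 24, [0, 2, 5, 7, 8, 10, 13, 15, 16, 18, 21, 23, 24, 26, 29, 31, 32, 34, 37, 39, 40, 42, 45, 47], [1, 2, 4, 7, 15, 23, 39], [1, 2, 4, 23, 39, 71, 39]),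
(215245570425795, 24, [0, 1, 6, 7, 8, 9, 14, 15, 16, 17, 22, 23, 24, 25, 30, 31, 32, 33, 38, 39, 40, 41, 46, 47], [1, 2, 4, 7, 15, 23, 71], [1, 2, 4, 23, 39, 39, 71]),
(115901460998505, 24, [0, 3, 5, 6, 8, 11, 13, 14, 16, 19, 21, 22, 24, 27, 29, 30, 32, 35, 37, 38, 40, 43, 45, 46], [1, 2, 4, 7, 15, 23, 39], [1, 2, 4, 23, 39, 71, 96]),
(1095233372415, 24, [0, 1, 2, 3, 4, 5, 6, 7, 16, 17, 18, 19, 20, 21, 22, 23, 32, 33, 34, 35, 36, 37, 38, 39], [1, 2, 4, 7, 23, 39, 71], [1, 2, 4, 0, 23, 39, 71]),
(187284906682965, 24, [0, 2, 4, 6, 9, 11, 13, 15, 16, 18, 20, 22, 25, 27, 29, 31, 32, 34, 36, 38, 41, 43, 45, 47], [1, 2, 4, 7, 15, 23, 39], [1, 2, 4, 23, 39, 71, 23])]"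

lemma TB19_len: "list_all (\<lambda>(nb, m, p, sa, sb). length p = m \<and> (m = 16 \<or> m = 24 \<or> m = 32)) TB19"
  by (simp add: TB19_def)

lemma TB19_ok: "list_all (\<lambda>(nb, m, p, sa, sb). chkb (Hsel m) nb p sa sb) TB19"
  unfolding TB19_def chkb_def Hsel_def H16N_def H24N_def H32N_def Dnums_def by (simp only: evr cong: if_weak_cong)

definition TB20 :: "(nat \<times> nat \<times> nat list \<times> nat list \<times> nat list) list" where
  "TB20 = [
(224522841345075, 24, [0, 1, 4, 5, 10, 11, 14, 15, 16, 17, 20, 21, 26, 27, 30, 31, 32, 33, 36, 37, 42, 43, 46, 47], [1, 2, 4, 7, 15, 23, 71], [1, 2, 4, 23, 39, 23, 71]),
(112809037358745, 24, [0, 3, 4, 7, 9, 10, 13, 14, 16, 19, 20, 23, 25, 26, 29, 30, 32, 35, 36, 39, 41, 42, 45, 46], [1, 2, 4, 7, 15, 23, 39], [1, 2, 4, 23, 39, 71, 80]),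
(263951242752015, 24, [0, 1, 2, 3, 12, 13, 14, 15, 16, 17, 18, 19, 28, 29, 30, 31, 32, 33, 34, 35, 44, 45, 46, 47], [1, 2, 4, 7, 15, 39, 71], [1, 2, 4, 23, 23, 39, 71]),
(99666236889765, 24, [0, 2, 5, 7, 9, 11, 12, 14, 16, 18, 21, 23, 25, 27, 28, 30, 32, 34, 37, 39, 41, 43, 44, 46], [1, 2, 4, 7, 15, 23, 39], [1, 2, 4, 23, 39, 71, 48]),
(66809235717315, 24, [0, 1, 6, 7, 10, 11, 12, 13, 16, 17, 22, 23, 26, 27, 28, 29, 32, 33, 38, 39, 42, 43, 44, 45], [1, 2, 4, 7, 15, 23, 71], [1, 2, 4, 23, 39, 48, 71]),
(165380239234665, 24, [0, 3, 5, 6, 9, 10, 12, 15, 16, 19, 21, 22, 25, 26, 28, 31, 32, 35, 37, 38, 41, 42, 44, 47], [1, 2, 4, 7, 15, 23, 39], [1, 2, 4, 23, 39, 71, 119])]"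

lemma TB20_len: "list_all (\<lambda>(nb, m, p, sa, sb). length p = m \<and> (m = 16 \<or> m = 24 \<or> m = 32)) TB20"
  by (simp add: TB20_def)

lemma TB20_ok: "list_all (\<lambda>(nb, m, p, sa, sb). chkb (Hsel m) nb p sa sb) TB20"
  unfolding TB20_def chkb_def Hsel_def H16N_def H24N_def H32N_def Dnums_def by (simp only: evr cong: if_weak_cong)

definition TBL :: "(nat \<times> nat \<times> nat list \<times> nat list \<times> nat list) list" where
  "TBL = TB0 @ TB1 @ TB2 @ TB3 @ TB4 @ TB5 @ TB6 @ TB7 @ TB8 @ TB9 @ TB10 @ TB11 @ TB12 @ TB13 @ TB14 @ TB15 @ TB16 @ TB17 @ TB18 @ TB19 @ TB20"

lemma TBL_ok: "list_all (\<lambda>(nb, m, p, sa, sb). length p = m \<and> (m = 16 \<or> m = 24 \<or> m = 32) \<and> chkb (Hsel m) nb p sa sb) TBL"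
proof -
  have "list_all (\<lambda>(nb, m, p, sa, sb). length p = m \<and> (m = 16 \<or> m = 24 \<or> m = 32)) TBL"
    unfolding TBL_def list_all_append using TB0_len TB1_len TB2_len TB3_len TB4_len TB5_len TB6_len TB7_len TB8_len TB9_len TB10_len TB11_len TB12_len TB13_len TB14_len TB15_len TB16_len TB17_len TB18_len TB19_len TB20_len by blast
  moreover have "list_all (\<lambda>(nb, m, p, sa, sb). chkb (Hsel m) nb p sa sb) TBL"
    unfolding TBL_def list_all_append using TB0_ok TB1_ok TB2_ok TB3_ok TB4_ok TB5_ok TB6_ok TB7_ok TB8_ok TB9_ok TB10_ok TB11_ok TB12_ok TB13_ok TB14_ok TB15_ok TB16_ok TB17_ok TB18_ok TB19_ok TB20_ok by blast
  ultimately show ?thesis by (auto simp: list_all_iff)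
qed

lemma TBL_cov: "filter (\<lambda>n. n \<noteq> 0 \<and> n \<noteq> 281474976710655) (spanN Dnums) = map fst TBL"
  unfolding TBL_def TB0_def TB1_def TB2_def TB3_def TB4_def TB5_def TB6_def TB7_def TB8_def TB9_def TB10_def TB11_def TB12_def TB13_def TB14_def TB15_def TB16_def TB17_def TB18_def TB19_def TB20_def Dnums_def by (simp only: evr spanN.simps filter.simps append.simps fst_conv cong: if_weak_cong)

theorem proposition6:
  "\<forall>\<beta>\<in>D_code.
     (card \<beta> = 16 \<longrightarrow> code_iso \<beta> (C_sub \<beta>) {..<16} (RM 2 4)) \<and>
     (card \<beta> = 24 \<longrightarrow> code_iso \<beta> (C_sub \<beta>) {..<24} Code24) \<and>
     (card \<beta> = 32 \<longrightarrow> code_iso \<beta> (C_sub \<beta>) {..<32} (RM 3 5)) \<and>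
     (card \<beta> = 48 \<longrightarrow> C_sub \<beta> = C_code) \<and>
     (\<beta> \<noteq> {} \<longrightarrow> (\<exists>S. S \<subseteq> C_sub \<beta> \<and> S = dual_code \<beta> S \<and>
                        code_iso \<beta> S {..<card \<beta>} (H8_sum (card \<beta> div 8))))"
proof
  fix \<beta> assume "\<beta> \<in> D_code"
  then obtain n where n: "n \<in> set (spanN Dnums)" "\<beta> = sw n" by (auto simp: D_code_eq)
  consider (z) "n = 0" | (f) "n = 281474976710655" | (t) "n \<noteq> 0 \<and> n \<noteq> 281474976710655" by blast
  then show "(card \<beta> = 16 \<longrightarrow> code_iso \<beta> (C_sub \<beta>) {..<16} (RM 2 4)) \<and>
     (card \<beta> = 24 \<longrightarrow> code_iso \<beta> (C_sub \<beta>) {..<24} Code24) \<and>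
     (card \<beta> = 32 \<longrightarrow> code_iso \<beta> (C_sub \<beta>) {..<32} (RM 3 5)) \<and>
     (card \<beta> = 48 \<longrightarrow> C_sub \<beta> = C_code) \<and>
     (\<beta> \<noteq> {} \<longrightarrow> (\<exists>S. S \<subseteq> C_sub \<beta> \<and> S = dual_code \<beta> S \<and>
                        code_iso \<beta> S {..<card \<beta>} (H8_sum (card \<beta> div 8))))"
  proof cases
    case z then show ?thesis using n by simp
  next
    case f
    have b: "\<beta> = {..<48}" using n f sw_mask[of 48] by simp
    have cs: "C_sub {..<48} = C_code" by (auto simp: C_sub_def C_code_def dual_code_def)
    have sd: "dual_code {..<48} (H8_sum 6) = H8_sum 6" by (rule H6_sd(2))
    have HP: "H8_sum 6 \<subseteq> Pow {..<48}" using H6_in by (auto simp: C_code_def dual_code_def)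
    have iso: "code_iso {..<48} (H8_sum 6) {..<48} (H8_sum 6)"
      by (rule iso_from[of id]) (use HP in auto)
    show ?thesis unfolding b using cs sd iso H6_in by auto
  next
    case t
    have "n \<in> set (filter (\<lambda>n. n \<noteq> 0 \<and> n \<noteq> 281474976710655) (spanN Dnums))" using n(1) t by simp
    then have "n \<in> set (map fst TBL)" unfolding TBL_cov .
    then obtain m p sa sb where row: "(n, m, p, sa, sb) \<in> set TBL" by auto
    then have lm: "length p = m" and L: "m = 16 \<or> m = 24 \<or> m = 32"
      and c0: "chkb (Hsel m) n p sa sb"
      using TBL_ok by (auto simp: list_all_iff)
    from L show ?thesis
    proof (elim disjE)
      assume mk: "m = 16"
      have l: "length p = 16" using lm mk by simp
      have c: "chkb H16N n p sa sb" using c0 mk by (simp add: Hsel_def)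
      have hb: "list_all (\<lambda>h. h < 2 ^ 16) H16N" by (simp add: H16N_def)
      have "card (sw n) = 16 \<and> code_iso (sw n) (C_sub (sw n)) {..<16} (RM 2 4)
        \<and> (\<exists>S. S \<subseteq> C_sub (sw n) \<and> S = dual_code (sw n) S
          \<and> code_iso (sw n) S {..<card (sw n)} (H8_sum (card (sw n) div 8)))"
        by (rule kind[OF c l hb]) (use RM24_dual H2_in H2_sd(2) in simp_all)
      then show ?thesis using n(2) by auto
    next
      assume mk: "m = 24"
      have l: "length p = 24" using lm mk by simp
      have c: "chkb H24N n p sa sb" using c0 mk by (simp add: Hsel_def)
      have hb: "list_all (\<lambda>h. h < 2 ^ 24) H24N" by (simp add: H24N_def)
      have "card (sw n) = 24 \<and> code_iso (sw n) (C_sub (sw n)) {..<24} Code24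
        \<and> (\<exists>S. S \<subseteq> C_sub (sw n) \<and> S = dual_code (sw n) S
          \<and> code_iso (sw n) S {..<card (sw n)} (H8_sum (card (sw n) div 8)))"
        by (rule kind[OF c l hb]) (use Code24_dual H3_in H3_sd(2) in simp_all)
      then show ?thesis using n(2) by auto
    next
      assume mk: "m = 32"
      have l: "length p = 32" using lm mk by simp
      have c: "chkb H32N n p sa sb" using c0 mk by (simp add: Hsel_def)
      have hb: "list_all (\<lambda>h. h < 2 ^ 32) H32N" by (simp add: H32N_def)
      have "card (sw n) = 32 \<and> code_iso (sw n) (C_sub (sw n)) {..<32} (RM 3 5)
        \<and> (\<exists>S. S \<subseteq> C_sub (sw n) \<and> S = dual_code (sw n) S
          \<and> code_iso (sw n) S {..<card (sw n)} (H8_sum (card (sw n) div 8)))"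
        by (rule kind[OF c l hb]) (use RM35_dual H4_in H4_sd(2) in simp_all)
      then show ?thesis using n(2) by auto
    qed
  qed
qed

end
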